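(* Let $\Gamma$ be a coloring and $\Omega$ a $k$-ordering of $T_{d,k}$. For every $d$-cell $\tau$ and every cell $\rho\subseteq\tau$, the set $L_{\rho,\tau}=\{g\in G_{d,k}: \rho\subseteq g.\tau\}$ equals the subgroup $K_{[\![d]\!]\setminus\Gamma(\rho)}$. In particular, it depends only on the color of $\rho$.
   Context: Fix $d,k\ge1$, $[\![d]\!]=\{0,\dots,d\}$. $G_{d,k}=\langle\alpha_0,\dots,\alpha_d\mid\alpha_i^k=e\rangle$; for $J\subseteq[\![d]\!]$, $K_J=\langle\alpha_j:j\in J\rangle$ ($K_\emptyset=\{e\}$). The arboreal complex $T_{d,k}$: start from a single $d$-simplex $\mathcal T$, attach to each of its $(d-1)$-faces $k-1$ new $d$-simplices each using a new vertex, and inductively attach to each $(d-1)$-face created in the previous step $k-1$ new $d$-simplices each using a new vertex; $T_{d,k}$ is the union. A coloring $\Gamma$ is a map from vertices to $[\![d]\!]$ injective on each $d$-cell, extended to cells by $\Gamma(\sigma)=\{\Gamma(v):v\in\sigma\}$. A $k$-ordering $\Omega$ assigns to each $(d-1)$-cell $\sigma$ a homomorphism $\Omega_\sigma:\mathbb Z/k\mathbb Z\to\mathrm{Sym}(\delta(\sigma))$ with transitive image, $\delta(\sigma)$ the set of $d$-cells containing $\sigma$. Left action on $d$-cells: $\alpha_i^l.\tau=\Omega_\sigma(l).\tau$ where $\sigma$ is the $(d-1)$-face of $\tau$ of color $[\![d]\!]\setminus\{i\}$, extended to words letter by letter (right-most first); this is a well-defined action of $G_{d,k}$. (Equivalently,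 $L_{\rho,\tau}$ is the set of $g$ for which the cell of $g.\tau$ of color $\Gamma(\rho)$ is $\rho$.) *)

theory Defs
  imports "HOL-Algebra.Algebra"
begin

text \<open>Letters: (i, True) stands for alpha_i, (i, False) for alpha_i^(-1).
  Words are lists of letters with indices in {0..d}.\<close>

type_synonym letter = "nat \<times> bool"

definition words :: "nat \<Rightarrow> letter list set" where
  "words d = {w. \<forall>x\<in>set w. fst x \<le> d}"

inductive_set elem_step :: "nat \<Rightarrow> nat \<Rightarrow> (letter list \<times> letter list) set"
  for d k where
  cancel: "i \<le> d \<Longrightarrow> (u @ [(i, b), (i, \<not> b)] @ v, u @ v) \<in> elem_step d k"
| relator: "i \<le> d \<Longrightarrow> (u @ replicate k (i, True) @ v, u @ v) \<in> elem_step d k"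

definition word_eqv :: "nat \<Rightarrow> nat \<Rightarrow> (letter list \<times> letter list) set" where
  "word_eqv d k = {(w, w'). w \<in> words d \<and> w' \<in> words d \<and>
                     (w, w') \<in> (elem_step d k \<union> (elem_step d k)\<inverse>)\<^sup>*}"

definition G_dk :: "nat \<Rightarrow> nat \<Rightarrow> letter list set monoid" where
  "G_dk d k = \<lparr>partial_object.carrier = words d // word_eqv d k,
     monoid.mult = (\<lambda>A B. word_eqv d k `` {(SOME a. a \<in> A) @ (SOME b. b \<in> B)}),
     monoid.one = word_eqv d k `` {[]}\<rparr>"

definition gen_alpha :: "nat \<Rightarrow> nat \<Rightarrow> nat \<Rightarrow> letter list set" where
  "gen_alpha d k i = word_eqv d k `` {[(i, True)]}"

definition K_sub :: "nat \<Rightarrow> nat \<Rightarrow> nat set \<Rightarrow> letter list set set" where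
  "K_sub d k J = generate (G_dk d k) (gen_alpha d k ` J)"

text \<open>Vertices: the d+1 vertices of the initial simplex, and one new vertex for every
  attached d-simplex, named by the path of attachments that created it.\<close>
datatype vert = Root nat | New "(vert \<times> nat) list"

text \<open>Pairs (p, V): p is the attachment path (a list of (omitted vertex, copy index in 1..k-1)),
  V is the vertex set of the d-simplex. The root simplex has all its (d-1)-faces available;
  a later simplex only has the faces that were created with it (those containing its new vertex).\<close>
inductive_set arb_cells :: "nat \<Rightarrow> nat \<Rightarrow> ((vert \<times> nat) list \<times> vert set) set"
  for d k where
  root: "([], Root ` {0..d}) \<in> arb_cells d k"
| attach: "(p, V) \<in> arb_cells d k \<Longrightarrow> v \<in> V \<Longrightarrow> (p = [] \<or> v \<noteq> New p) \<Longrightarrow>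
           1 \<le> j \<Longrightarrow> j < k \<Longrightarrow>
           (p @ [(v, j)], insert (New (p @ [(v, j)])) (V - {v})) \<in> arb_cells d k"

definition dcells :: "nat \<Rightarrow> nat \<Rightarrow> vert set set" where
  "dcells d k = snd ` arb_cells d k"

definition verts :: "nat \<Rightarrow> nat \<Rightarrow> vert set" where
  "verts d k = \<Union> (dcells d k)"

definition cells :: "nat \<Rightarrow> nat \<Rightarrow> vert set set" where
  "cells d k = {\<rho>. \<rho> \<noteq> {} \<and> (\<exists>\<tau>\<in>dcells d k. \<rho> \<subseteq> \<tau>)}"

definition ridges :: "nat \<Rightarrow> nat \<Rightarrow> vert set set" where
  "ridges d k = {\<sigma>. (\<exists>\<tau>\<in>dcells d k. \<sigma> \<subseteq> \<tau>) \<and> card \<sigma> = d}"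

definition delta :: "nat \<Rightarrow> nat \<Rightarrow> vert set \<Rightarrow> vert set set" where
  "delta d k \<sigma> = {\<tau> \<in> dcells d k. \<sigma> \<subseteq> \<tau>}"

definition coloring :: "nat \<Rightarrow> nat \<Rightarrow> (vert \<Rightarrow> nat) \<Rightarrow> bool" where
  "coloring d k \<Gamma> \<longleftrightarrow> (\<forall>v\<in>verts d k. \<Gamma> v \<le> d) \<and> (\<forall>\<tau>\<in>dcells d k. inj_on \<Gamma> \<tau>)"

definition k_ordering :: "nat \<Rightarrow> nat \<Rightarrow> (vert set \<Rightarrow> int \<Rightarrow> vert set \<Rightarrow> vert set) \<Rightarrow> bool" where
  "k_ordering d k \<Omega> \<longleftrightarrow> (\<forall>\<sigma>\<in>ridges d k.
      \<Omega> \<sigma> \<in> hom (integer_mod_group k) (BijGroup (delta d k \<sigma>)) \<and>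
      (\<forall>\<tau>\<in>delta d k \<sigma>. \<forall>\<tau>'\<in>delta d k \<sigma>.
          \<exists>l\<in>carrier (integer_mod_group k). \<Omega> \<sigma> l \<tau> = \<tau>'))"

text \<open>alpha_i acts by Omega_sigma(1), alpha_i^(-1) by Omega_sigma(-1) = Omega_sigma(k-1),
  where sigma is the face of tau of color [d] - {i}.\<close>
definition act_letter :: "nat \<Rightarrow> (vert \<Rightarrow> nat) \<Rightarrow> (vert set \<Rightarrow> int \<Rightarrow> vert set \<Rightarrow> vert set)
    \<Rightarrow> letter \<Rightarrow> vert set \<Rightarrow> vert set" where
  "act_letter k \<Gamma> \<Omega> x \<tau> =
     \<Omega> {v \<in> \<tau>. \<Gamma> v \<noteq> fst x} (if snd x then 1 mod int k else (int k - 1) mod int k) \<tau>"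

text \<open>Words act letter by letter, right-most letter first.\<close>
fun act_word :: "nat \<Rightarrow> (vert \<Rightarrow> nat) \<Rightarrow> (vert set \<Rightarrow> int \<Rightarrow> vert set \<Rightarrow> vert set)
    \<Rightarrow> letter list \<Rightarrow> vert set \<Rightarrow> vert set" where
  "act_word k \<Gamma> \<Omega> [] \<tau> = \<tau>"
| "act_word k \<Gamma> \<Omega> (x # w) \<tau> = act_letter k \<Gamma> \<Omega> x (act_word k \<Gamma> \<Omega> w \<tau>)"

definition act :: "nat \<Rightarrow> (vert \<Rightarrow> nat) \<Rightarrow> (vert set \<Rightarrow> int \<Rightarrow> vert set \<Rightarrow> vert set)
    \<Rightarrow> letter list set \<Rightarrow> vert set \<Rightarrow> vert set" where
  "act k \<Gamma> \<Omega> g \<tau> = act_word k \<Gamma> \<Omega> (SOME w. w \<in> g) \<tau>"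

definition L_set :: "nat \<Rightarrow> nat \<Rightarrow> (vert \<Rightarrow> nat) \<Rightarrow> (vert set \<Rightarrow> int \<Rightarrow> vert set \<Rightarrow> vert set)
    \<Rightarrow> vert set \<Rightarrow> vert set \<Rightarrow> letter list set set" where
  "L_set d k \<Gamma> \<Omega> \<rho> \<tau> = {g \<in> carrier (G_dk d k). \<rho> \<subseteq> act k \<Gamma> \<Omega> g \<tau>}"

end

theory Submission
  imports Defs
begin

lemma arb_verts:
  "(p,V) \<in> arb_cells d k \<Longrightarrow> \<forall>u\<in>V. (\<exists>i\<le>d. u = Root i) \<or> (\<exists>q r. u = New q \<and> q \<noteq> [] \<and> p = q @ r)"
proof (induction rule: arb_cells.induct)
  case root then show ?case by auto
next
  case (attach p V v j)
  show ?case
  proof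
    fix u assume "u \<in> insert (New (p @ [(v, j)])) (V - {v})"
    then show "(\<exists>i\<le>d. u = Root i) \<or> (\<exists>q r. u = New q \<and> q \<noteq> [] \<and> p @ [(v, j)] = q @ r)"
    proof
      assume "u = New (p @ [(v, j)])" then show ?thesis by auto
    next
      assume "u \<in> V - {v}"
      then have "(\<exists>i\<le>d. u = Root i) \<or> (\<exists>q r. u = New q \<and> q \<noteq> [] \<and> p = q @ r)" using attach.IH by auto
      then show ?thesis by force
    qed
  qed
qed

lemma arb_new: "(p,V) \<in> arb_cells d k \<Longrightarrow> p \<noteq> [] \<Longrightarrow> New p \<in> V"
  by (induction rule: arb_cells.induct) auto

lemma arb_newD: "(p,V) \<in> arb_cells d k \<Longrightarrow> New q \<in> V \<Longrightarrow> q \<noteq> [] \<and> (\<exists>r. p = q @ r)"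
  using arb_verts by fastforce

lemma arb_card: "(p,V) \<in> arb_cells d k \<Longrightarrow> finite V \<and> card V = Suc d"
proof (induction rule: arb_cells.induct)
  case root
  have "inj_on Root {0..d}" by (auto simp: inj_on_def)
  then show ?case by (simp add: card_image)
next
  case (attach p V v j)
  have "New (p @ [(v, j)]) \<notin> V"
  proof
    assume "New (p @ [(v, j)]) \<in> V"
    from arb_newD[OF attach.hyps(1) this] obtain r where "p = (p @ [(v, j)]) @ r" by auto
    then show False by (metis append_assoc append_self_conv append_is_Nil_conv not_Cons_self2)
  qed
  then show ?case using attach by (simp add: card_Diff_singleton)
qed

lemma arb_attach_inv:
  assumes "(p @ [(v,j)], W) \<in> arb_cells d k"
  shows "\<exists>V. (p,V) \<in> arb_cells d k \<and> v \<in> V \<and> (p = [] \<or> v \<noteq> New p) \<and> 1 \<le> j \<and> j < k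
     \<and> W = insert (New (p @ [(v, j)])) (V - {v})"
  using assms by (cases rule: arb_cells.cases) auto

lemma arb_root_inv: "([], W) \<in> arb_cells d k \<Longrightarrow> W = Root ` {0..d}"
  by (cases rule: arb_cells.cases) auto

lemma arb_fun: "(p,V) \<in> arb_cells d k \<Longrightarrow> (p,V') \<in> arb_cells d k \<Longrightarrow> V = V'"
proof (induction p arbitrary: V V' rule: rev_induct)
  case Nil then show ?case using arb_root_inv by blast
next
  case (snoc x p)
  obtain v j where x: "x = (v,j)" by (cases x)
  from arb_attach_inv[of p v j V d k] snoc.prems x obtain W where
    W: "(p,W) \<in> arb_cells d k" "V = insert (New (p @ [(v, j)])) (W - {v})" by auto
  from arb_attach_inv[of p v j V' d k] snoc.prems x obtain W' where
    W': "(p,W') \<in> arb_cells d k" "V' = insert (New (p @ [(v, j)])) (W' - {v})" by auto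
  from snoc.IH[OF W(1) W'(1)] W W' show ?case by simp
qed

lemma arb_inj: "(p,V) \<in> arb_cells d k \<Longrightarrow> (p',V) \<in> arb_cells d k \<Longrightarrow> p = p'"
proof -
  assume a: "(p,V) \<in> arb_cells d k" and b: "(p',V) \<in> arb_cells d k"
  have noNew: "\<And>q. New q \<notin> Root ` {0..d}" by auto
  show "p = p'"
  proof (cases "p = []")
    case True
    then have "V = Root ` {0..d}" using a arb_root_inv by blast
    then show ?thesis using True arb_new[OF b] noNew by auto
  next
    case False
    have "New p \<in> V" using arb_new[OF a False] .
    from arb_newD[OF b this] obtain r where r: "p' = p @ r" by auto
    then have "p' \<noteq> []" using False by auto
    have "New p' \<in> V" using arb_new[OF b \<open>p' \<noteq> []\<close>] .
    from arb_newD[OF a this] obtain r' where "p = p' @ r'" by auto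
    with r show ?thesis by auto
  qed
qed



definition pathof :: "nat \<Rightarrow> nat \<Rightarrow> vert set \<Rightarrow> (vert \<times> nat) list" where
  "pathof d k V = (THE p. (p,V) \<in> arb_cells d k)"

lemma pathof_eq: "(p,V) \<in> arb_cells d k \<Longrightarrow> pathof d k V = p"
  unfolding pathof_def using arb_inj by blast

lemma cell_arb: assumes "\<tau> \<in> dcells d k" shows "(pathof d k \<tau>, \<tau>) \<in> arb_cells d k"
proof -
  obtain x where x: "x \<in> arb_cells d k" "\<tau> = snd x" using assms unfolding dcells_def by blast
  then have "(fst x, \<tau>) \<in> arb_cells d k" by simp
  then show ?thesis using pathof_eq by metis
qed

lemma cell_card: "\<tau> \<in> dcells d k \<Longrightarrow> finite \<tau> \<and> card \<tau> = Suc d"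
  using cell_arb arb_card by blast

lemma carrier_Bij: "carrier (BijGroup S) = Bij S"
  unfolding BijGroup_def by (simp only: partial_object.simps)
lemma mult_Bij: "g \<in> Bij S \<Longrightarrow> f \<in> Bij S \<Longrightarrow> g \<otimes>\<^bsub>BijGroup S\<^esub> f = compose S g f"
  unfolding BijGroup_def by (simp only: monoid.simps restrict_apply' )
lemma one_Bij: "\<one>\<^bsub>BijGroup S\<^esub> = (\<lambda>x\<in>S. x)"
  unfolding BijGroup_def by (simp only: monoid.simps)

locale arbset =
  fixes d k :: nat and \<Gamma> :: "vert \<Rightarrow> nat"
    and \<Omega> :: "vert set \<Rightarrow> int \<Rightarrow> vert set \<Rightarrow> vert set"
  assumes d1: "1 \<le> d" and k1: "1 \<le> k"
    and col: "coloring d k \<Gamma>" and ord: "k_ordering d k \<Omega>"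
begin

definition face :: "vert set \<Rightarrow> nat \<Rightarrow> vert set" where
  "face \<tau> i = {v \<in> \<tau>. \<Gamma> v \<noteq> i}"

lemma col_img: assumes "\<tau> \<in> dcells d k" shows "\<Gamma> ` \<tau> = {0..d}" "inj_on \<Gamma> \<tau>"
proof -
  show inj: "inj_on \<Gamma> \<tau>" using col assms unfolding coloring_def by blast
  have "\<tau> \<subseteq> verts d k" using assms unfolding verts_def by blast
  then have sub: "\<Gamma> ` \<tau> \<subseteq> {0..d}" using col unfolding coloring_def by auto
  have "card (\<Gamma> ` \<tau>) = Suc d" using card_image[OF inj] cell_card[OF assms] by simp
  then show "\<Gamma> ` \<tau> = {0..d}" using sub by (simp add: card_subset_eq)
qed

lemma face_props:
  assumes "\<tau> \<in> dcells d k" "i \<le> d"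
  shows "\<exists>w\<in>\<tau>. \<Gamma> w = i \<and> face \<tau> i = \<tau> - {w}" "card (face \<tau> i) = d"
    "face \<tau> i \<in> ridges d k" "\<tau> \<in> delta d k (face \<tau> i)" "finite (face \<tau> i)"
proof -
  have "i \<in> \<Gamma> ` \<tau>" using col_img(1)[OF assms(1)] assms(2) by simp
  then obtain w where w: "w \<in> \<tau>" "\<Gamma> w = i" by blast
  have "face \<tau> i = \<tau> - {w}" using w col_img(2)[OF assms(1)] unfolding face_def inj_on_def by auto
  then show ex: "\<exists>w\<in>\<tau>. \<Gamma> w = i \<and> face \<tau> i = \<tau> - {w}" using w by blast
  show c: "card (face \<tau> i) = d" using \<open>face \<tau> i = \<tau> - {w}\<close> cell_card[OF assms(1)] w by simp
  show "face \<tau> i \<in> ridges d k" using c assms(1) unfolding ridges_def face_def by blast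
  show "\<tau> \<in> delta d k (face \<tau> i)" using assms(1) unfolding delta_def face_def by blast
  show "finite (face \<tau> i)" using cell_card[OF assms(1)] unfolding face_def by simp
qed

lemma face_same:
  assumes "\<tau> \<in> dcells d k" "i \<le> d" "\<tau>' \<in> delta d k (face \<tau> i)"
  shows "face \<tau>' i = face \<tau> i"
proof -
  have t': "\<tau>' \<in> dcells d k" "face \<tau> i \<subseteq> \<tau>'" using assms(3) unfolding delta_def by auto
  have "face \<tau> i \<subseteq> face \<tau>' i" using t'(2) unfolding face_def by auto
  moreover have "card (face \<tau> i) = card (face \<tau>' i)" using face_props(2)[OF assms(1,2)] face_props(2)[OF t'(1) assms(2)] by simp
  ultimately show ?thesis using face_props(5)[OF t'(1) assms(2)] card_subset_eq by metis
qed

lemma ridge_face: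
  assumes "\<sigma> \<in> ridges d k" "\<tau> \<in> delta d k \<sigma>"
  shows "\<exists>i\<le>d. \<sigma> = face \<tau> i"
proof -
  have t: "\<tau> \<in> dcells d k" "\<sigma> \<subseteq> \<tau>" using assms(2) unfolding delta_def by auto
  have cs: "card \<sigma> = d" using assms(1) unfolding ridges_def by auto
  have ft: "finite \<tau>" "card \<tau> = Suc d" using cell_card[OF t(1)] by auto
  have fs: "finite \<sigma>" using ft(1) t(2) finite_subset by blast
  have "card (\<tau> - \<sigma>) = 1" using card_Diff_subset[OF fs t(2)] ft(2) cs by simp
  then obtain w where w: "\<tau> - \<sigma> = {w}" by (meson card_1_singletonE)
  then have sig: "\<sigma> = \<tau> - {w}" "w \<in> \<tau>" using t(2) by auto
  have "face \<tau> (\<Gamma> w) = \<tau> - {w}" using sig col_img(2)[OF t(1)] unfolding face_def inj_on_def by auto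
  moreover have "\<Gamma> w \<le> d" using col_img(1)[OF t(1)] sig(2) by auto
  ultimately show ?thesis using sig by auto
qed


lemma carrier_Z: "carrier (integer_mod_group k) = {0..<int k}"
  using k1 carrier_integer_mod_group[of k] by auto

lemma hom_\<Omega>: "\<sigma> \<in> ridges d k \<Longrightarrow> group_hom (integer_mod_group k) (BijGroup (delta d k \<sigma>)) (\<Omega> \<sigma>)"
proof -
  assume "\<sigma> \<in> ridges d k"
  then have "\<Omega> \<sigma> \<in> hom (integer_mod_group k) (BijGroup (delta d k \<sigma>))"
    using ord unfolding k_ordering_def by blast
  then show ?thesis by (intro group_hom.intro group_hom_axioms.intro group_BijGroup group_integer_mod_group)
qed

lemma \<Omega>_in:
  assumes "\<sigma> \<in> ridges d k" "\<tau> \<in> delta d k \<sigma>" "l \<in> {0..<int k}"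
  shows "\<Omega> \<sigma> l \<tau> \<in> delta d k \<sigma>"
proof -
  have "l \<in> carrier (integer_mod_group k)" using assms(3) carrier_Z by simp
  then have "\<Omega> \<sigma> l \<in> carrier (BijGroup (delta d k \<sigma>))"
    by (rule group_hom.hom_closed[OF hom_\<Omega>[OF assms(1)]])
  then have "\<Omega> \<sigma> l \<in> Bij (delta d k \<sigma>)" by (simp only: carrier_Bij)
  then have "\<Omega> \<sigma> l \<in> delta d k \<sigma> \<rightarrow> delta d k \<sigma>" by (rule Bij_imp_funcset)
  then show ?thesis using assms(2) by (rule funcset_mem)
qed


lemma \<Omega>_comp:
  assumes "\<sigma> \<in> ridges d k" "\<tau> \<in> delta d k \<sigma>" "l1 \<in> {0..<int k}" "l2 \<in> {0..<int k}"
  shows "\<Omega> \<sigma> l1 (\<Omega> \<sigma> l2 \<tau>) = \<Omega> \<sigma> ((l1 + l2) mod int k) \<tau>"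
proof -
  have h: "group_hom (integer_mod_group k) (BijGroup (delta d k \<sigma>)) (\<Omega> \<sigma>)" using hom_\<Omega>[OF assms(1)] .
  have c: "l1 \<in> carrier (integer_mod_group k)" "l2 \<in> carrier (integer_mod_group k)" using assms(3,4) carrier_Z by simp_all
  have "\<Omega> \<sigma> (l1 \<otimes>\<^bsub>integer_mod_group k\<^esub> l2) = \<Omega> \<sigma> l1 \<otimes>\<^bsub>BijGroup (delta d k \<sigma>)\<^esub> \<Omega> \<sigma> l2"
    by (rule group_hom.hom_mult[OF h c])
  moreover have "l1 \<otimes>\<^bsub>integer_mod_group k\<^esub> l2 = (l1 + l2) mod int k" by simp
  moreover have "\<Omega> \<sigma> l1 \<in> Bij (delta d k \<sigma>)" "\<Omega> \<sigma> l2 \<in> Bij (delta d k \<sigma>)"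
    using group_hom.hom_closed[OF h c(1)] group_hom.hom_closed[OF h c(2)] by (simp_all only: carrier_Bij)
  ultimately have "\<Omega> \<sigma> ((l1 + l2) mod int k) = compose (delta d k \<sigma>) (\<Omega> \<sigma> l1) (\<Omega> \<sigma> l2)"
    using mult_Bij by metis
  then show ?thesis using assms(2) by (simp add: compose_eq)
qed

lemma \<Omega>_zero:
  assumes "\<sigma> \<in> ridges d k" "\<tau> \<in> delta d k \<sigma>"
  shows "\<Omega> \<sigma> 0 \<tau> = \<tau>"
proof -
  have h: "group_hom (integer_mod_group k) (BijGroup (delta d k \<sigma>)) (\<Omega> \<sigma>)" using hom_\<Omega>[OF assms(1)] .
  have "\<Omega> \<sigma> \<one>\<^bsub>integer_mod_group k\<^esub> = \<one>\<^bsub>BijGroup (delta d k \<sigma>)\<^esub>" by (rule group_hom.hom_one[OF h])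
  then have "\<Omega> \<sigma> 0 = (\<lambda>x\<in>delta d k \<sigma>. x)" by (simp only: one_Bij one_integer_mod_group)
  then show ?thesis using assms(2) by simp
qed

lemma \<Omega>_trans:
  assumes "\<sigma> \<in> ridges d k" "\<tau> \<in> delta d k \<sigma>" "\<tau>' \<in> delta d k \<sigma>"
  shows "\<exists>l\<in>{0..<int k}. \<Omega> \<sigma> l \<tau> = \<tau>'"
proof -
  have "\<forall>\<tau>\<in>delta d k \<sigma>. \<forall>\<tau>'\<in>delta d k \<sigma>. \<exists>l\<in>carrier (integer_mod_group k). \<Omega> \<sigma> l \<tau> = \<tau>'"
    using ord assms(1) unfolding k_ordering_def by blast
  then show ?thesis using assms(2,3) carrier_Z by auto
qed

end


context arbset begin

definition pth :: "vert set \<Rightarrow> (vert \<times> nat) list" where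
  "pth \<tau> = pathof d k \<tau>"

definition piF :: "vert set \<Rightarrow> vert set" where
  "piF \<tau> = \<tau> - {New (pth \<tau>)}"

definition creator :: "vert set \<Rightarrow> vert set" where
  "creator s = (THE c. c \<in> delta d k s \<and> s \<noteq> piF c)"

lemma cell_pth: "\<tau> \<in> dcells d k \<Longrightarrow> (pth \<tau>, \<tau>) \<in> arb_cells d k"
  unfolding pth_def by (rule cell_arb)

lemma arb_dcells: "(p,V) \<in> arb_cells d k \<Longrightarrow> V \<in> dcells d k"
  unfolding dcells_def by (metis image_eqI snd_conv)

lemma pth_eq: "(p,V) \<in> arb_cells d k \<Longrightarrow> pth V = p"
  unfolding pth_def by (rule pathof_eq)

lemma newin:
  assumes "\<tau> \<in> dcells d k" "s \<subseteq> \<tau>" "card s = d" "s \<noteq> piF \<tau>" "pth \<tau> \<noteq> []"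
  shows "New (pth \<tau>) \<in> s"
proof (rule ccontr)
  assume a: "New (pth \<tau>) \<notin> s"
  have inn: "New (pth \<tau>) \<in> \<tau>" using arb_new[OF cell_pth[OF assms(1)] assms(5)] .
  have ct: "finite \<tau>" "card \<tau> = Suc d" using cell_card[OF assms(1)] by auto
  have cp: "card (piF \<tau>) = d" unfolding piF_def using inn ct by simp
  have sub: "s \<subseteq> piF \<tau>" unfolding piF_def using a assms(2) by auto
  have "finite (piF \<tau>)" unfolding piF_def using ct by simp
  then have "s = piF \<tau>" using card_subset_eq[OF _ sub] cp assms(3) by simp
  then show False using assms(4) by simp
qed

lemma creator_unique:
  assumes "card s = d" "c1 \<in> delta d k s" "c2 \<in> delta d k s" "s \<noteq> piF c1" "s \<noteq> piF c2"
  shows "c1 = c2"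
proof -
  have c: "c1 \<in> dcells d k" "s \<subseteq> c1" "c2 \<in> dcells d k" "s \<subseteq> c2" using assms(2,3) unfolding delta_def by auto
  have a1: "(pth c1, c1) \<in> arb_cells d k" and a2: "(pth c2, c2) \<in> arb_cells d k" using cell_pth c by auto
  have pre12: "\<exists>r. pth c2 = pth c1 @ r" if "pth c1 \<noteq> []"
  proof -
    have "New (pth c1) \<in> c2" using newin[OF c(1) c(2) assms(1) assms(4) that] c(4) by blast
    then show ?thesis using arb_newD[OF a2] by blast
  qed
  have pre21: "\<exists>r. pth c1 = pth c2 @ r" if "pth c2 \<noteq> []"
  proof -
    have "New (pth c2) \<in> c1" using newin[OF c(3) c(4) assms(1) assms(5) that] c(2) by blast
    then show ?thesis using arb_newD[OF a1] by blast
  qed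
  have "pth c1 = pth c2"
  proof (cases "pth c1 = []")
    case True
    show ?thesis
    proof (cases "pth c2 = []")
      case True then show ?thesis using \<open>pth c1 = []\<close> by simp
    next
      case False then show ?thesis using pre21 True by auto
    qed
  next
    case False
    then obtain r where r: "pth c2 = pth c1 @ r" using pre12 by blast
    then have "pth c2 \<noteq> []" using False by simp
    then obtain r' where "pth c1 = pth c2 @ r'" using pre21 by blast
    then show ?thesis using r by simp
  qed
  then show ?thesis using arb_fun a1 a2 by metis
qed

lemma creator_eq:
  assumes "card s = d" "c \<in> delta d k s" "s \<noteq> piF c"
  shows "creator s = c"
  unfolding creator_def
proof (rule the_equality)
  show "c \<in> delta d k s \<and> s \<noteq> piF c" using assms by simp
  fix c' assume "c' \<in> delta d k s \<and> s \<noteq> piF c'"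
  then show "c' = c" using creator_unique[OF assms(1)] assms(2,3) by blast
qed

lemma parent:
  assumes "\<tau> \<in> dcells d k" "pth \<tau> \<noteq> []"
  shows "\<exists>V0. V0 \<in> dcells d k \<and> piF \<tau> \<subseteq> V0 \<and> creator (piF \<tau>) = V0 \<and> Suc (length (pth V0)) = length (pth \<tau>)
           \<and> card (piF \<tau>) = d \<and> piF \<tau> \<subseteq> \<tau> \<and> V0 \<in> delta d k (piF \<tau>) \<and> piF \<tau> \<noteq> piF V0"
proof -
  define p0 where "p0 = butlast (pth \<tau>)"
  obtain v j where x: "last (pth \<tau>) = (v,j)" by (cases "last (pth \<tau>)")
  have px: "pth \<tau> = p0 @ [(v,j)]" unfolding p0_def using assms(2) x append_butlast_last_id[OF assms(2)] by simp
  have a: "(p0 @ [(v,j)], \<tau>) \<in> arb_cells d k" using cell_pth[OF assms(1)] px by simp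
  from arb_attach_inv[OF a] obtain V0 where V0: "(p0,V0) \<in> arb_cells d k" "v \<in> V0"
     "p0 = [] \<or> v \<noteq> New p0" "\<tau> = insert (New (p0 @ [(v, j)])) (V0 - {v})" by blast
  have nn: "New (p0 @ [(v, j)]) \<notin> V0"
  proof
    assume "New (p0 @ [(v, j)]) \<in> V0"
    from arb_newD[OF V0(1) this] obtain r where "p0 = (p0 @ [(v, j)]) @ r" by blast
    then have "length p0 = length ((p0 @ [(v, j)]) @ r)" by (rule arg_cong)
    then show False by simp
  qed
  have pit: "piF \<tau> = V0 - {v}"
  proof -
    have "piF \<tau> = insert (New (p0 @ [(v, j)])) (V0 - {v}) - {New (p0 @ [(v, j)])}"
      unfolding piF_def using px V0(4) by simp
    also have "\<dots> = V0 - {v}" using nn by auto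
    finally show ?thesis .
  qed
  have V0c: "V0 \<in> dcells d k" using arb_dcells[OF V0(1)] .
  have cV: "finite V0" "card V0 = Suc d" using cell_card[OF V0c] by auto
  have cpi: "card (piF \<tau>) = d" using pit cV V0(2) by simp
  have del: "V0 \<in> delta d k (piF \<tau>)" unfolding delta_def using pit V0c by auto
  have ne: "piF \<tau> \<noteq> piF V0"
  proof (cases "p0 = []")
    case True
    have "New [] \<notin> V0" using arb_newD[OF V0(1)] by blast
    then have "piF V0 = V0" unfolding piF_def using pth_eq[OF V0(1)] True by simp
    then show ?thesis using pit V0(2) by auto
  next
    case False
    have "New p0 \<in> V0" using arb_new[OF V0(1) False] .
    moreover have "v \<noteq> New p0" using V0(3) False by simp
    ultimately have "New p0 \<in> piF \<tau>" using pit by simp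
    moreover have "New p0 \<notin> piF V0" unfolding piF_def using pth_eq[OF V0(1)] by simp
    ultimately show ?thesis by auto
  qed
  have cr: "creator (piF \<tau>) = V0" using creator_eq[OF cpi del ne] .
  have len: "Suc (length (pth V0)) = length (pth \<tau>)" using pth_eq[OF V0(1)] px by simp
  have s1: "piF \<tau> \<subseteq> \<tau>" unfolding piF_def by auto
  have s2: "piF \<tau> \<subseteq> V0" using pit by auto
  show ?thesis
    by (rule exI[of _ V0]) (intro conjI V0c s2 cr len cpi s1 del ne)
qed

definition parN :: "vert set \<Rightarrow> vert set" where
  "parN Y = (if card Y = Suc d then piF Y else creator Y)"

definition depN :: "vert set \<Rightarrow> nat" where
  "depN Y = (if card Y = Suc d then 2 * length (pth Y) else Suc (2 * length (pth (creator Y))))"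

lemma edge:
  assumes "s \<in> ridges d k" "c \<in> delta d k s"
  shows "(parN s = c \<and> depN s = Suc (depN c)) \<or> (parN c = s \<and> depN c = Suc (depN s))"
proof -
  have cs: "card s = d" using assms(1) unfolding ridges_def by simp
  have cc: "c \<in> dcells d k" "s \<subseteq> c" using assms(2) unfolding delta_def by auto
  have ccard: "card c = Suc d" using cell_card[OF cc(1)] by simp
  show ?thesis
  proof (cases "s = piF c")
    case False
    have "creator s = c" using creator_eq[OF cs assms(2) False] .
    then have "parN s = c \<and> depN s = Suc (depN c)" unfolding parN_def depN_def using cs ccard by simp
    then show ?thesis by simp
  next
    case True
    have ne: "pth c \<noteq> []"
    proof
      assume "pth c = []"
      have "New [] \<notin> c" using arb_newD[OF cell_pth[OF cc(1)]] by blast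
      then have "piF c = c" unfolding piF_def using \<open>pth c = []\<close> by simp
      then show False using True cs ccard by simp
    qed
    from parent[OF cc(1) ne] obtain V0 where V0: "creator (piF c) = V0" "Suc (length (pth V0)) = length (pth c)" by blast
    have "parN c = s" unfolding parN_def using ccard True by simp
    moreover have "depN c = Suc (depN s)" unfolding depN_def using ccard cs True V0 by simp
    ultimately show ?thesis by simp
  qed
qed

lemma exists_creator:
  assumes "s \<in> ridges d k"
  shows "\<exists>c. c \<in> delta d k s \<and> s \<noteq> piF c"
proof -
  obtain c0 where c0: "c0 \<in> dcells d k" "s \<subseteq> c0" "card s = d" using assms(1) unfolding ridges_def by blast
  show ?thesis
  proof (cases "s = piF c0")
    case False then show ?thesis using c0 unfolding delta_def by blast
  next
    case True
    have ne: "pth c0 \<noteq> []"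
    proof
      assume "pth c0 = []"
      have "New [] \<notin> c0" using arb_newD[OF cell_pth[OF c0(1)]] by blast
      then have "piF c0 = c0" unfolding piF_def using \<open>pth c0 = []\<close> by simp
      then show False using True c0 cell_card[OF c0(1)] by simp
    qed
    from parent[OF c0(1) ne] obtain V0 where V0: "V0 \<in> delta d k (piF c0)" "piF c0 \<noteq> piF V0" by blast
    then show ?thesis using True by blast
  qed
qed

lemma card_delta:
  assumes "s \<in> ridges d k" "finite (delta d k s)"
  shows "k \<le> card (delta d k s)"
proof -
  obtain c where c: "c \<in> delta d k s" "s \<noteq> piF c" using exists_creator[OF assms(1)] by blast
  have cc: "c \<in> dcells d k" "s \<subseteq> c" using c(1) unfolding delta_def by auto
  have cs: "card s = d" using assms(1) unfolding ridges_def by simp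
  obtain i where i: "i \<le> d" "s = face c i" using ridge_face[OF assms(1) c(1)] by blast
  obtain u where u: "u \<in> c" "s = c - {u}" using face_props(1)[OF cc(1) i(1)] i(2) by blast
  define p where "p = pth c"
  have ac: "(p, c) \<in> arb_cells d k" unfolding p_def using cell_pth[OF cc(1)] .
  have cond: "p = [] \<or> u \<noteq> New p"
  proof (cases "p = []")
    case False
    have "New p \<in> s" using newin[OF cc(1) cc(2) cs c(2)] False unfolding p_def by simp
    then show ?thesis using u by auto
  qed simp
  define ch where "ch j = insert (New (p @ [(u,j)])) (c - {u})" for j
  have ach: "(p @ [(u,j)], ch j) \<in> arb_cells d k" if "1 \<le> j" "j < k" for j
    unfolding ch_def using arb_cells.attach[OF ac u(1) cond that] .
  have sub: "insert c (ch ` {1..<k}) \<subseteq> delta d k s"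
  proof
    fix x assume "x \<in> insert c (ch ` {1..<k})"
    then show "x \<in> delta d k s"
    proof
      assume "x = c" then show ?thesis using c(1) by simp
    next
      assume "x \<in> ch ` {1..<k}"
      then obtain j where j: "j \<in> {1..<k}" "x = ch j" by blast
      have "x \<in> dcells d k" using arb_dcells[OF ach] j by simp
      moreover have "s \<subseteq> x" using j u unfolding ch_def by auto
      ultimately show ?thesis unfolding delta_def by simp
    qed
  qed
  have inj: "inj_on ch {1..<k}"
  proof (rule inj_onI)
    fix a b assume ab: "a \<in> {1..<k}" "b \<in> {1..<k}" "ch a = ch b"
    have pa: "pth (ch a) = p @ [(u,a)]" using pth_eq[OF ach] ab(1,2) by simp
    have pb: "pth (ch b) = p @ [(u,b)]" using pth_eq[OF ach] ab(1,2) by simp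
    have "p @ [(u,a)] = p @ [(u,b)]" using pa pb ab(3) by metis
    then show "a = b" by simp
  qed
  have notc: "c \<notin> ch ` {1..<k}"
  proof
    assume "c \<in> ch ` {1..<k}"
    then obtain j where j: "j \<in> {1..<k}" "c = ch j" by blast
    have "pth (ch j) = p @ [(u,j)]" using pth_eq[OF ach] j by simp
    moreover have "pth c = p" unfolding p_def by simp
    ultimately show False using j by simp
  qed
  have "card (insert c (ch ` {1..<k})) = k"
    using notc card_image[OF inj] k1 by simp
  then show ?thesis using card_mono[OF assms(2) sub] by simp
qed

lemma regular:
  assumes "s \<in> ridges d k" "\<tau> \<in> delta d k s" "l \<in> {0..<int k}" "\<Omega> s l \<tau> = \<tau>"
  shows "l = 0"
proof -
  define f where "f l = \<Omega> s l \<tau>" for l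
  have img: "f ` {0..<int k} = delta d k s"
  proof
    show "f ` {0..<int k} \<subseteq> delta d k s" unfolding f_def using \<Omega>_in[OF assms(1,2)] by auto
    show "delta d k s \<subseteq> f ` {0..<int k}"
    proof
      fix x assume "x \<in> delta d k s"
      then obtain l where "l \<in> {0..<int k}" "\<Omega> s l \<tau> = x" using \<Omega>_trans[OF assms(1,2)] by blast
      then show "x \<in> f ` {0..<int k}" unfolding f_def by blast
    qed
  qed
  have fin: "finite (delta d k s)" using img[symmetric] by simp
  have "card (f ` {0..<int k}) = card {0..<int k}"
  proof (rule antisym)
    show "card (f ` {0..<int k}) \<le> card {0..<int k}" by (rule card_image_le) simp
    show "card {0..<int k} \<le> card (f ` {0..<int k})" using card_delta[OF assms(1) fin] img by simp
  qed
  then have inj: "inj_on f {0..<int k}" by (rule eq_card_imp_inj_on[rotated]) simp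
  have "f l = f 0" unfolding f_def using assms(4) \<Omega>_zero[OF assms(1,2)] by simp
  moreover have "(0::int) \<in> {0..<int k}" using k1 by simp
  ultimately show ?thesis using inj assms(3) unfolding inj_on_def by blast
qed

end


context arbset begin

definition lval :: "letter \<Rightarrow> int" where
  "lval x = (if snd x then 1 mod int k else (int k - 1) mod int k)"

lemma lval_in: "lval x \<in> {0..<int k}"
  unfolding lval_def using k1 by auto

lemma act_letter_eq:
  "act_letter k \<Gamma> \<Omega> x \<tau> = \<Omega> (face \<tau> (fst x)) (lval x) \<tau>"
  unfolding act_letter_def face_def lval_def by simp

lemma act_letter_in:
  assumes "\<tau> \<in> dcells d k" "fst x \<le> d"
  shows "act_letter k \<Gamma> \<Omega> x \<tau> \<in> delta d k (face \<tau> (fst x))"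
    "act_letter k \<Gamma> \<Omega> x \<tau> \<in> dcells d k"
    "face (act_letter k \<Gamma> \<Omega> x \<tau>) (fst x) = face \<tau> (fst x)"
proof -
  show a: "act_letter k \<Gamma> \<Omega> x \<tau> \<in> delta d k (face \<tau> (fst x))"
    unfolding act_letter_eq
    by (rule \<Omega>_in[OF face_props(3)[OF assms] face_props(4)[OF assms] lval_in])
  then show "act_letter k \<Gamma> \<Omega> x \<tau> \<in> dcells d k" unfolding delta_def by simp
  show "face (act_letter k \<Gamma> \<Omega> x \<tau>) (fst x) = face \<tau> (fst x)"
    by (rule face_same[OF assms a])
qed

lemma act_append: "act_word k \<Gamma> \<Omega> (u @ v) \<tau> = act_word k \<Gamma> \<Omega> u (act_word k \<Gamma> \<Omega> v \<tau>)"
  by (induction u) auto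

lemma act_word_in:
  assumes "\<tau> \<in> dcells d k" "\<forall>x\<in>set w. fst x \<le> d"
  shows "act_word k \<Gamma> \<Omega> w \<tau> \<in> dcells d k"
  using assms(2)
proof (induction w)
  case Nil then show ?case using assms(1) by simp
next
  case (Cons x w)
  then show ?case using act_letter_in(2) by simp
qed

lemma act_rep:
  assumes "\<tau> \<in> dcells d k" "i \<le> d"
  shows "act_word k \<Gamma> \<Omega> (replicate n (i,True)) \<tau> = \<Omega> (face \<tau> i) (int n mod int k) \<tau>"
proof (induction n)
  case 0
  show ?case using \<Omega>_zero[OF face_props(3)[OF assms] face_props(4)[OF assms]] by simp
next
  case (Suc n)
  let ?s = "face \<tau> i"
  have r: "?s \<in> ridges d k" "\<tau> \<in> delta d k ?s" using face_props(3,4)[OF assms] by auto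
  have nin: "int n mod int k \<in> {0..<int k}" using k1 by simp
  have t1: "\<Omega> ?s (int n mod int k) \<tau> \<in> delta d k ?s" using \<Omega>_in[OF r nin] .
  then have t1c: "\<Omega> ?s (int n mod int k) \<tau> \<in> dcells d k" unfolding delta_def by simp
  have fs: "face (\<Omega> ?s (int n mod int k) \<tau>) i = ?s" using face_same[OF assms t1] .
  have "act_word k \<Gamma> \<Omega> (replicate (Suc n) (i,True)) \<tau> = act_letter k \<Gamma> \<Omega> (i,True) (\<Omega> ?s (int n mod int k) \<tau>)"
    using Suc by simp
  also have "\<dots> = \<Omega> ?s (1 mod int k) (\<Omega> ?s (int n mod int k) \<tau>)"
    unfolding act_letter_eq using fs by (simp add: lval_def)
  also have "\<dots> = \<Omega> ?s ((1 mod int k + int n mod int k) mod int k) \<tau>"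
    using \<Omega>_comp[OF r _ nin] k1 by simp
  also have "(1 mod int k + int n mod int k) mod int k = int (Suc n) mod int k"
    by (simp add: mod_add_eq add.commute)
  finally show ?case .
qed

lemma act_pair:
  assumes "\<tau> \<in> dcells d k" "i \<le> d"
  shows "act_word k \<Gamma> \<Omega> [(i,b),(i,\<not>b)] \<tau> = \<tau>"
proof -
  let ?s = "face \<tau> i"
  have r: "?s \<in> ridges d k" "\<tau> \<in> delta d k ?s" using face_props(3,4)[OF assms] by auto
  have l2: "lval (i,\<not>b) \<in> {0..<int k}" by (rule lval_in)
  have t1: "\<Omega> ?s (lval (i,\<not>b)) \<tau> \<in> delta d k ?s" using \<Omega>_in[OF r l2] .
  have fs: "face (\<Omega> ?s (lval (i,\<not>b)) \<tau>) i = ?s" using face_same[OF assms t1] .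
  have "act_word k \<Gamma> \<Omega> [(i,b),(i,\<not>b)] \<tau> = \<Omega> ?s (lval (i,b)) (\<Omega> ?s (lval (i,\<not>b)) \<tau>)"
    using fs by (simp add: act_letter_eq)
  also have "\<dots> = \<Omega> ?s ((lval (i,b) + lval (i,\<not>b)) mod int k) \<tau>"
    using \<Omega>_comp[OF r lval_in l2] .
  also have "(lval (i,b) + lval (i,\<not>b)) mod int k = 0"
  proof -
    have "(lval (i,b) + lval (i,\<not>b)) mod int k = (1 + (int k - 1)) mod int k"
      unfolding lval_def by (cases b) (simp_all add: mod_add_eq add.commute)
    then show ?thesis by simp
  qed
  also have "\<Omega> ?s 0 \<tau> = \<tau>" using \<Omega>_zero[OF r] .
  finally show ?thesis .
qed

lemma act_relator:
  assumes "\<tau> \<in> dcells d k" "i \<le> d"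
  shows "act_word k \<Gamma> \<Omega> (replicate k (i,True)) \<tau> = \<tau>"
  using act_rep[OF assms, of k] \<Omega>_zero[OF face_props(3)[OF assms] face_props(4)[OF assms]] by simp

lemma step_inv:
  assumes "(w, w') \<in> elem_step d k"
  shows "(\<forall>x\<in>set w. fst x \<le> d) \<longleftrightarrow> (\<forall>x\<in>set w'. fst x \<le> d) \<and> (\<forall>x\<in>set w. fst x \<le> d)"
    "(\<forall>x\<in>set w. fst x \<le> d) \<Longrightarrow> \<tau> \<in> dcells d k \<Longrightarrow> act_word k \<Gamma> \<Omega> w \<tau> = act_word k \<Gamma> \<Omega> w' \<tau>"
proof -
  show "(\<forall>x\<in>set w. fst x \<le> d) \<longleftrightarrow> (\<forall>x\<in>set w'. fst x \<le> d) \<and> (\<forall>x\<in>set w. fst x \<le> d)"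
    using assms by (cases rule: elem_step.cases) auto
  assume wd: "\<forall>x\<in>set w. fst x \<le> d" and t: "\<tau> \<in> dcells d k"
  from assms show "act_word k \<Gamma> \<Omega> w \<tau> = act_word k \<Gamma> \<Omega> w' \<tau>"
  proof (cases rule: elem_step.cases)
    case (cancel i u b v)
    have vd: "\<forall>x\<in>set v. fst x \<le> d" using wd cancel by simp
    have tv: "act_word k \<Gamma> \<Omega> v \<tau> \<in> dcells d k" using act_word_in[OF t vd] .
    have "act_word k \<Gamma> \<Omega> w \<tau> = act_word k \<Gamma> \<Omega> u (act_word k \<Gamma> \<Omega> [(i,b),(i,\<not>b)] (act_word k \<Gamma> \<Omega> v \<tau>))"
      using cancel(1) act_append by (metis append.assoc)
    then show ?thesis using cancel(2) act_pair[OF tv cancel(3)] act_append by metis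
  next
    case (relator i u v)
    have vd: "\<forall>x\<in>set v. fst x \<le> d" using wd relator by simp
    have tv: "act_word k \<Gamma> \<Omega> v \<tau> \<in> dcells d k" using act_word_in[OF t vd] .
    have "act_word k \<Gamma> \<Omega> w \<tau> = act_word k \<Gamma> \<Omega> u (act_word k \<Gamma> \<Omega> (replicate k (i,True)) (act_word k \<Gamma> \<Omega> v \<tau>))"
      using relator(1) act_append by metis
    then show ?thesis using relator(2) act_relator[OF tv relator(3)] act_append by metis
  qed
qed

end


abbreviation R :: "nat \<Rightarrow> nat \<Rightarrow> (letter list \<times> letter list) set" where
  "R d k \<equiv> (elem_step d k \<union> (elem_step d k)\<inverse>)\<^sup>*"

lemma step_words: "(w, w') \<in> elem_step d k \<Longrightarrow> (w \<in> words d \<longleftrightarrow> w' \<in> words d \<and> (\<forall>x\<in>set w. fst x \<le> d))"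
  by (cases rule: elem_step.cases) (auto simp: words_def)

lemma R_words: "(w, w') \<in> R d k \<Longrightarrow> w \<in> words d \<Longrightarrow> w' \<in> words d"
proof (induction rule: rtrancl_induct)
  case base then show ?case by simp
next
  case (step y z)
  then have "(y,z) \<in> elem_step d k \<or> (z,y) \<in> elem_step d k" by auto
  then show ?case
  proof
    assume "(y,z) \<in> elem_step d k" then show ?thesis using step_words step by blast
  next
    assume zy: "(z,y) \<in> elem_step d k"
    then have "\<forall>x\<in>set z. fst x \<le> d" using step.IH step.prems
      by (cases rule: elem_step.cases) (auto simp: words_def)
    then show ?thesis by (simp add: words_def)
  qed
qed

lemma R_sym: "(w, w') \<in> R d k \<Longrightarrow> (w', w) \<in> R d k"
proof -
  assume "(w, w') \<in> R d k"
  then have "(w', w) \<in> ((elem_step d k \<union> (elem_step d k)\<inverse>)\<inverse>)\<^sup>*" by (simp add: rtrancl_converse)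
  moreover have "(elem_step d k \<union> (elem_step d k)\<inverse>)\<inverse> = elem_step d k \<union> (elem_step d k)\<inverse>" by auto
  ultimately show ?thesis by simp
qed

lemma equiv_eqv: "equiv (words d) (word_eqv d k)"
proof (rule equivI)
  show "refl_on (words d) (word_eqv d k)" unfolding refl_on_def word_eqv_def by auto
  show "word_eqv d k \<subseteq> words d \<times> words d" unfolding word_eqv_def by auto
  show "sym (word_eqv d k)"
  proof (rule symI)
    fix x y assume "(x,y) \<in> word_eqv d k"
    then show "(y,x) \<in> word_eqv d k" unfolding word_eqv_def using R_sym[of x y] by simp
  qed
  show "trans (word_eqv d k)"
  proof (rule transI)
    fix x y z assume "(x,y) \<in> word_eqv d k" "(y,z) \<in> word_eqv d k"
    then show "(x,z) \<in> word_eqv d k" unfolding word_eqv_def using rtrancl_trans[of x y _ z] by simp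
  qed
qed

lemma eqv_words: "(w, w') \<in> word_eqv d k \<Longrightarrow> w \<in> words d \<and> w' \<in> words d \<and> (w, w') \<in> R d k"
  unfolding word_eqv_def by simp

lemma R_eqv: "(w, w') \<in> R d k \<Longrightarrow> w \<in> words d \<Longrightarrow> (w, w') \<in> word_eqv d k"
  unfolding word_eqv_def using R_words by blast

lemma step_eqv: "(w, w') \<in> elem_step d k \<Longrightarrow> w \<in> words d \<Longrightarrow> (w, w') \<in> word_eqv d k"
  using R_eqv by blast

lemma R_map:
  assumes "\<And>x y. (x,y) \<in> elem_step d k \<Longrightarrow> (f x, f y) \<in> elem_step d k"
  shows "(w, w') \<in> R d k \<Longrightarrow> (f w, f w') \<in> R d k"
proof (induction rule: rtrancl_induct)
  case base then show ?case by simp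
next
  case (step y z)
  then have "(f y, f z) \<in> elem_step d k \<union> (elem_step d k)\<inverse>" using assms by auto
  then show ?case using step.IH by (rule rtrancl_into_rtrancl[rotated])
qed

lemma step_app_r: assumes "(x,y) \<in> elem_step d k" shows "(x @ b, y @ b) \<in> elem_step d k"
  using assms
proof (cases rule: elem_step.cases)
  case (cancel i u bb v)
  then show ?thesis using elem_step.cancel[where i=i and u=u and b=bb and v="v @ b" and d=d and k=k] by simp
next
  case (relator i u v)
  then show ?thesis using elem_step.relator[where i=i and u=u and v="v @ b" and d=d and k=k] by simp
qed

lemma step_app_l: assumes "(x,y) \<in> elem_step d k" shows "(b @ x, b @ y) \<in> elem_step d k"
  using assms
proof (cases rule: elem_step.cases)
  case (cancel i u bb v)
  then show ?thesis using elem_step.cancel[where i=i and u="b @ u" and b=bb and v=v and d=d and k=k] by simp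
next
  case (relator i u v)
  then show ?thesis using elem_step.relator[where i=i and u="b @ u" and v=v and d=d and k=k] by simp
qed

lemma eqv_cong:
  assumes "(a, a') \<in> word_eqv d k" "(b, b') \<in> word_eqv d k"
  shows "(a @ b, a' @ b') \<in> word_eqv d k"
proof -
  have a: "(a, a') \<in> R d k" "a \<in> words d" "a' \<in> words d" using eqv_words[OF assms(1)] by auto
  have b: "(b, b') \<in> R d k" "b \<in> words d" "b' \<in> words d" using eqv_words[OF assms(2)] by auto
  have "(a @ b, a' @ b) \<in> R d k" using R_map[where f="\<lambda>x. x @ b", OF step_app_r a(1)] .
  moreover have "(a' @ b, a' @ b') \<in> R d k" using R_map[where f="\<lambda>x. a' @ x", OF step_app_l b(1)] .
  ultimately have "(a @ b, a' @ b') \<in> R d k" by (rule rtrancl_trans)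
  moreover have "a @ b \<in> words d" using a b by (auto simp: words_def)
  ultimately show ?thesis by (rule R_eqv)
qed

definition cls :: "nat \<Rightarrow> nat \<Rightarrow> letter list \<Rightarrow> letter list set" where
  "cls d k w = word_eqv d k `` {w}"

lemma cls_mem: "w \<in> words d \<Longrightarrow> w \<in> cls d k w"
  unfolding cls_def word_eqv_def by auto

lemma cls_eq: "(w, w') \<in> word_eqv d k \<Longrightarrow> cls d k w = cls d k w'"
  unfolding cls_def using equiv_class_eq[OF equiv_eqv] by blast

lemma cls_eq_iff: "w \<in> words d \<Longrightarrow> w' \<in> words d \<Longrightarrow> cls d k w = cls d k w' \<longleftrightarrow> (w, w') \<in> word_eqv d k"
  unfolding cls_def using eq_equiv_class_iff[OF equiv_eqv] by blast

lemma cls_memD: "x \<in> cls d k w \<Longrightarrow> (w, x) \<in> word_eqv d k"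
  unfolding cls_def by simp

lemma some_cls: "w \<in> words d \<Longrightarrow> (w, SOME x. x \<in> cls d k w) \<in> word_eqv d k"
proof -
  assume "w \<in> words d"
  then have "(SOME x. x \<in> cls d k w) \<in> cls d k w" using someI[of "\<lambda>x. x \<in> cls d k w", OF cls_mem] by simp
  then show ?thesis by (rule cls_memD)
qed

lemma eqv_sym: "(w, w') \<in> word_eqv d k \<Longrightarrow> (w', w) \<in> word_eqv d k"
  using equiv_eqv unfolding equiv_def sym_def by blast

lemma eqv_trans: "(w, w') \<in> word_eqv d k \<Longrightarrow> (w', w'') \<in> word_eqv d k \<Longrightarrow> (w, w'') \<in> word_eqv d k"
  using equiv_eqv unfolding equiv_def trans_def by blast

lemma carrier_G: "carrier (G_dk d k) = cls d k ` words d"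
  unfolding G_dk_def cls_def quotient_def by auto

lemma one_G: "\<one>\<^bsub>G_dk d k\<^esub> = cls d k []"
  unfolding G_dk_def cls_def by simp

lemma mult_G:
  assumes "a \<in> words d" "b \<in> words d"
  shows "cls d k a \<otimes>\<^bsub>G_dk d k\<^esub> cls d k b = cls d k (a @ b)"
proof -
  have "cls d k a \<otimes>\<^bsub>G_dk d k\<^esub> cls d k b = cls d k ((SOME x. x \<in> cls d k a) @ (SOME y. y \<in> cls d k b))"
    unfolding G_dk_def cls_def by simp
  also have "\<dots> = cls d k (a @ b)"
  proof (rule cls_eq)
    have "((SOME x. x \<in> cls d k a), a) \<in> word_eqv d k" using eqv_sym[OF some_cls[OF assms(1)]] .
    moreover have "((SOME x. x \<in> cls d k b), b) \<in> word_eqv d k" using eqv_sym[OF some_cls[OF assms(2)]] .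
    ultimately show "((SOME x. x \<in> cls d k a) @ (SOME y. y \<in> cls d k b), a @ b) \<in> word_eqv d k"
      by (rule eqv_cong)
  qed
  finally show ?thesis .
qed



definition invw :: "letter list \<Rightarrow> letter list" where
  "invw w = rev (map (\<lambda>x. (fst x, \<not> snd x)) w)"

lemma invw_words: "w \<in> words d \<Longrightarrow> invw w \<in> words d"
  unfolding invw_def words_def by auto

lemma invw_invw: "invw (invw w) = w"
  unfolding invw_def by (simp add: rev_map comp_def)

lemma invw_Cons: "invw (x # w) = invw w @ [(fst x, \<not> snd x)]"
  unfolding invw_def by simp

lemma inv_left: "w \<in> words d \<Longrightarrow> (invw w @ w, []) \<in> word_eqv d k"
proof (induction w)
  case Nil
  then show ?case using equiv_eqv[of d k] unfolding equiv_def refl_on_def invw_def by simp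
next
  case (Cons x w)
  obtain i b where x: "x = (i,b)" by (cases x)
  have wd: "w \<in> words d" "i \<le> d" using Cons.prems x by (auto simp: words_def)
  have e: "invw (x # w) @ x # w = invw w @ [(i,\<not>b),(i,\<not>\<not>b)] @ w" using x by (simp add: invw_Cons)
  have st: "(invw w @ [(i,\<not>b),(i,\<not>\<not>b)] @ w, invw w @ w) \<in> elem_step d k"
    by (rule elem_step.cancel[OF wd(2)])
  have "invw w @ [(i,\<not>b),(i,\<not>\<not>b)] @ w \<in> words d"
    using wd invw_words[OF wd(1)] by (auto simp: words_def)
  then have "(invw w @ [(i,\<not>b),(i,\<not>\<not>b)] @ w, invw w @ w) \<in> word_eqv d k" using step_eqv st by blast
  then show ?case using e eqv_trans Cons.IH[OF wd(1)] by metis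
qed

lemma inv_right: "w \<in> words d \<Longrightarrow> (w @ invw w, []) \<in> word_eqv d k"
  using inv_left[OF invw_words, of w d k] invw_invw by metis

lemma group_G: "group (G_dk d k)"
proof (rule groupI)
  fix x y assume "x \<in> carrier (G_dk d k)" "y \<in> carrier (G_dk d k)"
  then obtain a b where ab: "a \<in> words d" "b \<in> words d" "x = cls d k a" "y = cls d k b" using carrier_G by auto
  have "a @ b \<in> words d" using ab by (auto simp: words_def)
  then have "cls d k (a @ b) \<in> carrier (G_dk d k)" unfolding carrier_G by (rule imageI)
  then show "x \<otimes>\<^bsub>G_dk d k\<^esub> y \<in> carrier (G_dk d k)" using mult_G ab by simp
next
  show "\<one>\<^bsub>G_dk d k\<^esub> \<in> carrier (G_dk d k)" using one_G carrier_G by (auto simp: words_def)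
next
  fix x y z assume "x \<in> carrier (G_dk d k)" "y \<in> carrier (G_dk d k)" "z \<in> carrier (G_dk d k)"
  then obtain a b c where abc: "a \<in> words d" "b \<in> words d" "c \<in> words d" "x = cls d k a" "y = cls d k b" "z = cls d k c"
    unfolding carrier_G by blast
  have ab: "a @ b \<in> words d" "b @ c \<in> words d" using abc by (auto simp: words_def)
  show "x \<otimes>\<^bsub>G_dk d k\<^esub> y \<otimes>\<^bsub>G_dk d k\<^esub> z = x \<otimes>\<^bsub>G_dk d k\<^esub> (y \<otimes>\<^bsub>G_dk d k\<^esub> z)"
    using abc ab mult_G by simp
next
  fix x assume "x \<in> carrier (G_dk d k)"
  then obtain a where a: "a \<in> words d" "x = cls d k a" using carrier_G by auto
  show "\<one>\<^bsub>G_dk d k\<^esub> \<otimes>\<^bsub>G_dk d k\<^esub> x = x" using a one_G mult_G[of "[]" d a k] by (simp add: words_def)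
next
  fix x assume "x \<in> carrier (G_dk d k)"
  then obtain a where a: "a \<in> words d" "x = cls d k a" using carrier_G by auto
  have "cls d k (invw a) \<otimes>\<^bsub>G_dk d k\<^esub> x = cls d k (invw a @ a)" using a mult_G invw_words by simp
  also have "\<dots> = \<one>\<^bsub>G_dk d k\<^esub>" using cls_eq[OF inv_left[OF a(1)]] one_G by simp
  finally have "cls d k (invw a) \<otimes>\<^bsub>G_dk d k\<^esub> x = \<one>\<^bsub>G_dk d k\<^esub>" .
  moreover have "cls d k (invw a) \<in> carrier (G_dk d k)" unfolding carrier_G using invw_words[OF a(1)] by (rule imageI)
  ultimately show "\<exists>y\<in>carrier (G_dk d k). y \<otimes>\<^bsub>G_dk d k\<^esub> x = \<one>\<^bsub>G_dk d k\<^esub>" by blast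
qed

lemma inv_G: "a \<in> words d \<Longrightarrow> inv\<^bsub>G_dk d k\<^esub> (cls d k a) = cls d k (invw a)"
proof -
  assume a: "a \<in> words d"
  have "cls d k (invw a) \<otimes>\<^bsub>G_dk d k\<^esub> cls d k a = cls d k (invw a @ a)" using a mult_G invw_words by simp
  also have "\<dots> = \<one>\<^bsub>G_dk d k\<^esub>" using cls_eq[OF inv_left[OF a]] one_G by simp
  finally have "cls d k (invw a) \<otimes>\<^bsub>G_dk d k\<^esub> cls d k a = \<one>\<^bsub>G_dk d k\<^esub>" .
  moreover have "cls d k a \<in> carrier (G_dk d k)" unfolding carrier_G using a by (rule imageI)
  moreover have "cls d k (invw a) \<in> carrier (G_dk d k)" unfolding carrier_G using invw_words[OF a] by (rule imageI)
  ultimately show ?thesis by (rule group.inv_equality[OF group_G])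
qed

definition wordsJ :: "nat set \<Rightarrow> letter list set" where
  "wordsJ J = {w. \<forall>x\<in>set w. fst x \<in> J}"

lemma wordsJ_words: "J \<subseteq> {0..d} \<Longrightarrow> wordsJ J \<subseteq> words d"
  unfolding wordsJ_def words_def by auto

lemma K_char:
  assumes J: "J \<subseteq> {0..d}"
  shows "K_sub d k J = cls d k ` wordsJ J"
proof
  show "K_sub d k J \<subseteq> cls d k ` wordsJ J"
  proof
    fix g assume "g \<in> K_sub d k J"
    then show "g \<in> cls d k ` wordsJ J" unfolding K_sub_def
    proof (induction rule: generate.induct)
      case one
      show ?case using one_G by (auto simp: wordsJ_def)
    next
      case (incl h)
      then obtain i where i: "i \<in> J" "h = cls d k [(i,True)]" unfolding gen_alpha_def cls_def by blast
      then show ?case by (auto simp: wordsJ_def)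
    next
      case (inv h)
      then obtain i where i: "i \<in> J" "h = cls d k [(i,True)]" unfolding gen_alpha_def cls_def by blast
      have "[(i,True)] \<in> words d" using i J by (auto simp: words_def)
      then have "inv\<^bsub>G_dk d k\<^esub> h = cls d k [(i,False)]" using inv_G i by (simp add: invw_def)
      then show ?case using i by (auto simp: wordsJ_def)
    next
      case (eng h1 h2)
      then obtain a b where ab: "a \<in> wordsJ J" "b \<in> wordsJ J" "h1 = cls d k a" "h2 = cls d k b" by blast
      have "a \<in> words d" "b \<in> words d" using ab wordsJ_words[OF J] by auto
      then have "h1 \<otimes>\<^bsub>G_dk d k\<^esub> h2 = cls d k (a @ b)" using ab mult_G by simp
      moreover have "a @ b \<in> wordsJ J" using ab by (auto simp: wordsJ_def)
      ultimately show ?case by blast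
    qed
  qed
next
  show "cls d k ` wordsJ J \<subseteq> K_sub d k J"
  proof
    fix g assume "g \<in> cls d k ` wordsJ J"
    then obtain w where w: "w \<in> wordsJ J" "g = cls d k w" by blast
    have "cls d k w \<in> K_sub d k J" using w(1)
    proof (induction w)
      case Nil
      show ?case unfolding K_sub_def using one_G generate.one by metis
    next
      case (Cons x w)
      obtain i b where x: "x = (i,b)" by (cases x)
      have iJ: "i \<in> J" using Cons.prems x by (simp add: wordsJ_def)
      have wJ: "w \<in> wordsJ J" using Cons.prems by (simp add: wordsJ_def)
      have xw: "[x] \<in> words d" "w \<in> words d" using iJ J x wordsJ_words[OF J] wJ by (auto simp: words_def)
      have e: "cls d k (x # w) = cls d k [x] \<otimes>\<^bsub>G_dk d k\<^esub> cls d k w" using mult_G[OF xw] by simp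
      have g: "cls d k [(i,True)] \<in> gen_alpha d k ` J" using iJ unfolding gen_alpha_def cls_def by blast
      have "cls d k [x] \<in> K_sub d k J"
      proof (cases b)
        case True
        then show ?thesis using x g unfolding K_sub_def by (simp add: generate.incl)
      next
        case False
        have "[(i,True)] \<in> words d" using iJ J by (auto simp: words_def)
        then have "inv\<^bsub>G_dk d k\<^esub> (cls d k [(i,True)]) = cls d k [x]" using inv_G x False by (simp add: invw_def)
        then show ?thesis using g generate.inv unfolding K_sub_def by metis
      qed
      then show ?case using e Cons.IH[OF wJ] unfolding K_sub_def by (simp add: generate.eng)
    qed
    then show "g \<in> K_sub d k J" using w by simp
  qed
qed



context arbset begin

lemma eqv_act:
  assumes "(w, w') \<in> word_eqv d k" "\<tau> \<in> dcells d k"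
  shows "act_word k \<Gamma> \<Omega> w \<tau> = act_word k \<Gamma> \<Omega> w' \<tau>"
proof -
  have r: "(w, w') \<in> R d k" and wd: "w \<in> words d" using eqv_words[OF assms(1)] by auto
  have "w' \<in> words d \<and> act_word k \<Gamma> \<Omega> w \<tau> = act_word k \<Gamma> \<Omega> w' \<tau>"
    using r
  proof (induction rule: rtrancl_induct)
    case base then show ?case using wd by simp
  next
    case (step y z)
    have yd: "y \<in> words d" and eq: "act_word k \<Gamma> \<Omega> w \<tau> = act_word k \<Gamma> \<Omega> y \<tau>" using step.IH by auto
    have "(y,z) \<in> elem_step d k \<or> (z,y) \<in> elem_step d k" using step.hyps(2) by auto
    then show ?case
    proof
      assume st: "(y,z) \<in> elem_step d k"
      have zd: "z \<in> words d" using step_words[OF st] yd by simp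
      have "act_word k \<Gamma> \<Omega> y \<tau> = act_word k \<Gamma> \<Omega> z \<tau>"
        using step_inv(2)[OF st _ assms(2)] yd by (simp add: words_def)
      then show ?thesis using zd eq by simp
    next
      assume st: "(z,y) \<in> elem_step d k"
      have zd: "z \<in> words d" using st yd
        by (cases rule: elem_step.cases) (auto simp: words_def)
      have "act_word k \<Gamma> \<Omega> z \<tau> = act_word k \<Gamma> \<Omega> y \<tau>"
        using step_inv(2)[OF st _ assms(2)] zd by (simp add: words_def)
      then show ?thesis using zd eq by simp
    qed
  qed
  then show ?thesis by simp
qed

lemma act_cls:
  assumes "w \<in> words d" "\<tau> \<in> dcells d k"
  shows "act k \<Gamma> \<Omega> (cls d k w) \<tau> = act_word k \<Gamma> \<Omega> w \<tau>"
  unfolding act_def using eqv_act[OF some_cls[OF assms(1)] assms(2)] by simp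

definition desc :: "vert set \<Rightarrow> vert set \<Rightarrow> bool" where
  "desc x y \<longleftrightarrow> (\<exists>n. (parN ^^ n) x = y \<and> depN y + n = depN x)"

lemma desc_refl: "desc x x"
  unfolding desc_def by (rule exI[of _ 0]) simp

lemma desc_up: "desc x y \<Longrightarrow> parN y = z \<Longrightarrow> depN y = Suc (depN z) \<Longrightarrow> desc x z"
  unfolding desc_def
proof -
  assume "\<exists>n. (parN ^^ n) x = y \<and> depN y + n = depN x" "parN y = z" "depN y = Suc (depN z)"
  then obtain n where n: "(parN ^^ n) x = y" "depN y + n = depN x" and yz: "parN y = z" "depN y = Suc (depN z)" by blast
  have "(parN ^^ Suc n) x = z" using n(1) yz(1) by simp
  moreover have "depN z + Suc n = depN x" using n(2) yz(2) by simp
  ultimately show "\<exists>n. (parN ^^ n) x = z \<and> depN z + n = depN x" by blast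
qed

lemma desc_down: "desc x y \<Longrightarrow> parN x' = x \<Longrightarrow> depN x' = Suc (depN x) \<Longrightarrow> desc x' y"
  unfolding desc_def
proof -
  assume "\<exists>n. (parN ^^ n) x = y \<and> depN y + n = depN x" "parN x' = x" "depN x' = Suc (depN x)"
  then obtain n where n: "(parN ^^ n) x = y" "depN y + n = depN x" and yz: "parN x' = x" "depN x' = Suc (depN x)" by blast
  have "(parN ^^ Suc n) x' = y" using n(1) yz(1) by (simp only: funpow_Suc_right comp_apply)
  moreover have "depN y + Suc n = depN x'" using n(2) yz(2) by simp
  ultimately show "\<exists>n. (parN ^^ n) x' = y \<and> depN y + n = depN x'" by blast
qed

lemma desc_uniq: "desc x y \<Longrightarrow> desc x z \<Longrightarrow> depN y = depN z \<Longrightarrow> y = z"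
  unfolding desc_def
proof -
  assume "\<exists>n. (parN ^^ n) x = y \<and> depN y + n = depN x" "\<exists>n. (parN ^^ n) x = z \<and> depN z + n = depN x" "depN y = depN z"
  then obtain n m where "(parN ^^ n) x = y" "depN y + n = depN x" "(parN ^^ m) x = z" "depN z + m = depN x" "depN y = depN z"
    by blast
  then show "y = z" by (metis add_left_cancel)
qed

lemma desc_dep: "desc x y \<Longrightarrow> depN y \<le> depN x"
  unfolding desc_def by auto

definition stU :: "vert set \<Rightarrow> vert set \<Rightarrow> vert set \<Rightarrow> bool" where
  "stU t0 c s \<longleftrightarrow> (parN s = c \<and> desc t0 s) \<or> (parN c = s \<and> (\<exists>Q. desc c Q \<and> \<not> desc t0 Q))"

lemma gstep:
  assumes "s' \<in> ridges d k" "c \<in> delta d k s'" "c' \<in> delta d k s'" "c' \<noteq> c"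
    and pre: "(desc t0 c \<and> (parN s' = c \<longrightarrow> \<not> desc t0 s')) \<or> (parN c \<noteq> s' \<and> (\<exists>Q. desc c Q \<and> \<not> desc t0 Q))"
  shows "stU t0 c' s'"
proof -
  have E1: "(parN s' = c \<and> depN s' = Suc (depN c)) \<or> (parN c = s' \<and> depN c = Suc (depN s'))" using edge[OF assms(1,2)] .
  have E2: "(parN s' = c' \<and> depN s' = Suc (depN c')) \<or> (parN c' = s' \<and> depN c' = Suc (depN s'))" using edge[OF assms(1,3)] .
  from pre show ?thesis
  proof
    assume U: "desc t0 c \<and> (parN s' = c \<longrightarrow> \<not> desc t0 s')"
    from E1 show ?thesis
    proof
      assume a: "parN s' = c \<and> depN s' = Suc (depN c)"
      then have nd: "\<not> desc t0 s'" using U by simp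
      have b: "parN c' = s' \<and> depN c' = Suc (depN s')" using E2 a assms(4) by auto
      have "desc c' s'" using desc_up[OF desc_refl] b by blast
      then show ?thesis unfolding stU_def using b nd by blast
    next
      assume a: "parN c = s' \<and> depN c = Suc (depN s')"
      have ds: "desc t0 s'" using desc_up[of t0 c s'] U a by blast
      from E2 show ?thesis
      proof
        assume "parN s' = c' \<and> depN s' = Suc (depN c')"
        then show ?thesis unfolding stU_def using ds by blast
      next
        assume b: "parN c' = s' \<and> depN c' = Suc (depN s')"
        have "\<not> desc t0 c'"
        proof
          assume "desc t0 c'"
          then have "c = c'" using desc_uniq[of t0 c c'] U a b by simp
          then show False using assms(4) by simp
        qed
        then show ?thesis unfolding stU_def using b desc_refl by blast
      qed
    qed
  next
    assume D: "parN c \<noteq> s' \<and> (\<exists>Q. desc c Q \<and> \<not> desc t0 Q)"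
    then obtain Q where Q: "desc c Q" "\<not> desc t0 Q" by blast
    have a: "parN s' = c \<and> depN s' = Suc (depN c)" using E1 D by blast
    have b: "parN c' = s' \<and> depN c' = Suc (depN s')" using E2 a assms(4) by auto
    have "desc s' Q" using desc_down[OF Q(1)] a by blast
    then have "desc c' Q" using desc_down b by blast
    then show ?thesis unfolding stU_def using b Q(2) by blast
  qed
qed

end


definition wob :: "(nat \<times> nat) list \<Rightarrow> letter list" where
  "wob bs = concat (map (\<lambda>b. replicate (snd b) (fst b, True)) bs)"

lemma wob_Nil[simp]: "wob [] = []" unfolding wob_def by simp
lemma wob_Cons[simp]: "wob (b # bs) = replicate (snd b) (fst b, True) @ wob bs" unfolding wob_def by simp

fun chainD :: "(nat \<times> nat) list \<Rightarrow> bool" where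
  "chainD [] = True"
| "chainD [x] = True"
| "chainD (x # y # r) = (fst x \<noteq> fst y \<and> chainD (y # r))"

lemma decomp:
  assumes "\<forall>x\<in>set w. snd x"
  shows "\<exists>bs. w = wob bs \<and> chainD bs \<and> (\<forall>b\<in>set bs. 0 < snd b \<and> (\<exists>u v. w = u @ replicate (snd b) (fst b, True) @ v))"
  using assms
proof (induction w)
  case Nil
  show ?case by (rule exI[of _ "[]"]) simp
next
  case (Cons x w)
  obtain i where x: "x = (i, True)" using Cons.prems by (cases x) auto
  from Cons.IH Cons.prems obtain bs where bs: "w = wob bs" "chainD bs"
    "\<forall>b\<in>set bs. 0 < snd b \<and> (\<exists>u v. w = u @ replicate (snd b) (fst b, True) @ v)" by auto
  have old: "\<forall>b\<in>set bs. 0 < snd b \<and> (\<exists>u v. x # w = u @ replicate (snd b) (fst b, True) @ v)"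
  proof
    fix b assume "b \<in> set bs"
    then obtain u v where "0 < snd b" "w = u @ replicate (snd b) (fst b, True) @ v" using bs(3) by blast
    then show "0 < snd b \<and> (\<exists>u v. x # w = u @ replicate (snd b) (fst b, True) @ v)"
      by (intro conjI exI[of _ "x # u"] exI[of _ v]) simp_all
  qed
  show ?case
  proof (cases bs)
    case Nil
    then show ?thesis using bs x by (intro exI[of _ "[(i,1)]"]) auto
  next
    case (Cons b r)
    show ?thesis
    proof (cases "fst b = i")
      case True
      let ?bs = "(i, Suc (snd b)) # r"
      have e: "x # w = wob ?bs" using bs(1) Cons x True by simp
      have c: "chainD ?bs" using bs(2) Cons True by (cases r) auto
      have n: "\<forall>b\<in>set ?bs. 0 < snd b \<and> (\<exists>u v. x # w = u @ replicate (snd b) (fst b, True) @ v)"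
      proof
        fix b' assume "b' \<in> set ?bs"
        then have "b' = hd ?bs \<or> b' \<in> set (tl ?bs)" by simp
        then show "0 < snd b' \<and> (\<exists>u v. x # w = u @ replicate (snd b') (fst b', True) @ v)"
        proof
          assume "b' = hd ?bs"
          then show ?thesis using e by (intro conjI exI[of _ "[]"] exI[of _ "wob r"]) simp_all
        next
          assume "b' \<in> set (tl ?bs)" then show ?thesis using old Cons by simp
        qed
      qed
      show ?thesis using e c n by blast
    next
      case False
      let ?bs = "(i, 1) # bs"
      have e: "x # w = wob ?bs" using bs(1) x by simp
      have c: "chainD ?bs" using bs(2) Cons False by simp
      have n: "\<forall>b\<in>set ?bs. 0 < snd b \<and> (\<exists>u v. x # w = u @ replicate (snd b) (fst b, True) @ v)"
      proof
        fix b' assume "b' \<in> set ?bs"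
        then have "b' = hd ?bs \<or> b' \<in> set (tl ?bs)" by simp
        then show "0 < snd b' \<and> (\<exists>u v. x # w = u @ replicate (snd b') (fst b', True) @ v)"
        proof
          assume "b' = hd ?bs"
          then show ?thesis using x by (intro conjI exI[of _ "[]"] exI[of _ "w"]) simp_all
        next
          assume "b' \<in> set (tl ?bs)" then show ?thesis using old by simp
        qed
      qed
      show ?thesis using e c n by blast
    qed
  qed
qed

context arbset begin

lemma edge_excl:
  assumes "s \<in> ridges d k" "c \<in> delta d k s" "parN s = c" "parN c = s"
  shows False
proof -
  have cs: "card s = d" using assms(1) unfolding ridges_def by simp
  have cc: "card c = Suc d" using assms(2) cell_card unfolding delta_def by auto
  obtain c' where c': "c' \<in> delta d k s" "s \<noteq> piF c'" using exists_creator[OF assms(1)] by blast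
  have "creator s = c'" using creator_eq[OF cs c'] .
  moreover have "creator s = c" using assms(3) cs unfolding parN_def by simp
  moreover have "piF c = s" using assms(4) cc unfolding parN_def by simp
  ultimately show False using c'(2) by simp
qed

lemma edge_d:
  assumes "s \<in> ridges d k" "c \<in> delta d k s" "parN s = c"
  shows "depN s = Suc (depN c)"
  using edge[OF assms(1,2)] edge_excl[OF assms(1,2,3)] by blast

lemma edge_u:
  assumes "s \<in> ridges d k" "c \<in> delta d k s" "parN c = s"
  shows "depN c = Suc (depN s)"
  using edge[OF assms(1,2)] edge_excl[OF assms(1,2) _ assms(3)] by blast

lemma face_ne:
  assumes "c \<in> dcells d k" "i \<le> d" "j \<le> d" "i \<noteq> j"
  shows "face c i \<noteq> face c j"
proof -
  obtain w where w: "w \<in> c" "\<Gamma> w = j" "face c j = c - {w}" using face_props(1)[OF assms(1,3)] by blast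
  have "w \<in> face c i" unfolding face_def using w assms(4) by simp
  moreover have "w \<notin> face c j" using w by simp
  ultimately show ?thesis by blast
qed

lemma blocks_inv:
  assumes "bs \<noteq> []" "\<forall>b\<in>set bs. fst b \<le> d \<and> 0 < snd b \<and> snd b < k" "chainD bs" "t0 \<in> dcells d k"
  shows "act_word k \<Gamma> \<Omega> (wob bs) t0 \<in> dcells d k \<and>
         stU t0 (act_word k \<Gamma> \<Omega> (wob bs) t0) (face (act_word k \<Gamma> \<Omega> (wob bs) t0) (fst (hd bs)))"
  using assms(1-3)
proof (induction bs)
  case Nil then show ?case by simp
next
  case (Cons b bs')
  obtain i e where b: "b = (i,e)" by (cases b)
  have ie: "i \<le> d" "0 < e" "e < k" using Cons.prems(2) b by auto
  define c0 where "c0 = act_word k \<Gamma> \<Omega> (wob bs') t0"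
  define s' where "s' = face c0 i"
  have c0c: "c0 \<in> dcells d k"
    unfolding c0_def using act_word_in[OF assms(4)] Cons.prems(2) by (auto simp: wob_def)
  have r: "s' \<in> ridges d k" "c0 \<in> delta d k s'" unfolding s'_def using face_props(3,4)[OF c0c ie(1)] by auto
  define c where "c = act_word k \<Gamma> \<Omega> (wob (b # bs')) t0"
  have ce: "c = \<Omega> s' (int e mod int k) c0"
    unfolding c_def s'_def c0_def using act_rep[OF c0c ie(1)] b act_append c0_def by simp
  have ein: "int e mod int k \<in> {0..<int k}" using k1 by simp
  have cin: "c \<in> delta d k s'" using ce \<Omega>_in[OF r ein] by simp
  have ccells: "c \<in> dcells d k" using cin unfolding delta_def by simp
  have cne: "c \<noteq> c0"
  proof
    assume "c = c0"
    then have "int e mod int k = 0" using regular[OF r ein] ce by simp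
    then show False using ie by simp
  qed
  have fc: "face c i = s'" unfolding s'_def using face_same[OF c0c ie(1)] cin s'_def by simp
  have pre: "(desc t0 c0 \<and> (parN s' = c0 \<longrightarrow> \<not> desc t0 s')) \<or> (parN c0 \<noteq> s' \<and> (\<exists>Q. desc c0 Q \<and> \<not> desc t0 Q))"
  proof (cases "bs' = []")
    case True
    then have "c0 = t0" unfolding c0_def by simp
    moreover have "parN s' = t0 \<longrightarrow> \<not> desc t0 s'"
    proof
      assume "parN s' = t0"
      then have "depN s' = Suc (depN t0)" using edge_d[OF r] \<open>c0 = t0\<close> by simp
      then show "\<not> desc t0 s'" using desc_dep by fastforce
    qed
    ultimately show ?thesis using desc_refl by simp
  next
    case False
    obtain b2 r2 where bs': "bs' = b2 # r2" using False by (cases bs') auto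
    have IH: "stU t0 c0 (face c0 (fst (hd bs')))"
      using Cons.IH[OF False] Cons.prems unfolding c0_def by (simp add: bs' b)
    define so where "so = face c0 (fst b2)"
    have j: "fst b2 \<le> d" "fst b2 \<noteq> i" using Cons.prems(2,3) bs' b by auto
    have sne: "so \<noteq> s'" unfolding so_def s'_def using face_ne[OF c0c j(1) ie(1) j(2)] .
    have so_r: "so \<in> ridges d k" "c0 \<in> delta d k so" unfolding so_def using face_props(3,4)[OF c0c j(1)] by auto
    have st: "stU t0 c0 so" using IH unfolding so_def bs' by simp
    then show ?thesis unfolding stU_def
    proof
      assume a: "parN so = c0 \<and> desc t0 so"
      have e1: "depN so = Suc (depN c0)"
        using edge_d[OF so_r] a by simp
      have dc: "desc t0 c0" using desc_up a e1 by blast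
      have "parN s' = c0 \<longrightarrow> \<not> desc t0 s'"
      proof
        assume "parN s' = c0"
        then have e2: "depN s' = Suc (depN c0)" using edge_d[OF r] by simp
        show "\<not> desc t0 s'"
        proof
          assume "desc t0 s'"
          then have "so = s'" using desc_uniq[of t0 so s'] a e1 e2 by simp
          then show False using sne by simp
        qed
      qed
      then show ?thesis using dc by blast
    next
      assume a: "parN c0 = so \<and> (\<exists>Q. desc c0 Q \<and> \<not> desc t0 Q)"
      then have "parN c0 \<noteq> s'" using sne by auto
      then show ?thesis using a by blast
    qed
  qed
  have "stU t0 c s'" using gstep[OF r cin cne pre] .
  then show ?case using ccells fc b unfolding c_def by simp
qed

lemma moves:
  assumes "w \<noteq> []" "\<forall>x\<in>set w. snd x \<and> fst x \<le> d"
    "\<not> (\<exists>u v i. w = u @ replicate k (i,True) @ v)" "t0 \<in> dcells d k"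
  shows "act_word k \<Gamma> \<Omega> w t0 \<noteq> t0"
proof -
  obtain bs where bs: "w = wob bs" "chainD bs"
      "\<forall>b\<in>set bs. 0 < snd b \<and> (\<exists>u v. w = u @ replicate (snd b) (fst b, True) @ v)"
    using decomp[of w] assms(2) by auto
  have ne: "bs \<noteq> []" using bs(1) assms(1) by auto
  have val: "\<forall>b\<in>set bs. fst b \<le> d \<and> 0 < snd b \<and> snd b < k"
  proof
    fix b assume bb: "b \<in> set bs"
    then obtain u v where p: "0 < snd b" "w = u @ replicate (snd b) (fst b, True) @ v" using bs(3) by blast
    have "(fst b, True) \<in> set w" using p by simp
    then have "fst b \<le> d" using assms(2) by auto
    moreover have "snd b < k"
    proof (rule ccontr)
      assume "\<not> snd b < k"
      then have "replicate (snd b) (fst b, True) = replicate k (fst b, True) @ replicate (snd b - k) (fst b, True)"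
        by (simp add: replicate_add[symmetric])
      then have "w = u @ replicate k (fst b, True) @ (replicate (snd b - k) (fst b, True) @ v)" using p by simp
      then show False using assms(3) by blast
    qed
    ultimately show "fst b \<le> d \<and> 0 < snd b \<and> snd b < k" using p by simp
  qed
  define c where "c = act_word k \<Gamma> \<Omega> (wob bs) t0"
  have st: "stU t0 c (face c (fst (hd bs)))" using blocks_inv[OF ne val bs(2) assms(4)] unfolding c_def by simp
  have "c \<noteq> t0"
  proof
    assume ct: "c = t0"
    from st show False unfolding stU_def
    proof
      assume a: "parN (face c (fst (hd bs))) = c \<and> desc t0 (face c (fst (hd bs)))"
      have cc: "c \<in> dcells d k" using ct assms(4) by simp
      have hd: "fst (hd bs) \<le> d" using val ne by simp
      have "depN (face c (fst (hd bs))) = Suc (depN c)"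
        using edge_d[OF face_props(3,4)[OF cc hd]] a by simp
      then show False using desc_dep a ct by fastforce
    next
      assume "parN c = face c (fst (hd bs)) \<and> (\<exists>Q. desc c Q \<and> \<not> desc t0 Q)"
      then show False using ct by blast
    qed
  qed
  then show ?thesis unfolding c_def bs(1) .
qed

end


context arbset begin

lemma eqv_refl: "w \<in> words d \<Longrightarrow> (w, w) \<in> word_eqv d k"
  unfolding word_eqv_def by simp

lemma neg_letter:
  assumes "i \<le> d"
  shows "([(i,False)], replicate (k - 1) (i,True)) \<in> word_eqv d k"
proof -
  have kk: "replicate k (i,True) = (i,True) # replicate (k - 1) (i,True)" using k1
    by (metis Suc_diff_1 less_le_trans less_numeral_extra(1) replicate_Suc)
  define a where "a = [(i,False)] @ replicate k (i,True) @ []"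
  have aw: "a \<in> words d" unfolding a_def words_def using assms by auto
  have s1: "(a, [(i,False)] @ []) \<in> elem_step d k" unfolding a_def by (rule elem_step.relator[OF assms])
  have a2: "a = [] @ [(i,False),(i,\<not>False)] @ replicate (k - 1) (i,True)" unfolding a_def using kk by simp
  have s2: "(a, [] @ replicate (k - 1) (i,True)) \<in> elem_step d k" unfolding a2 by (rule elem_step.cancel[OF assms])
  have e1: "(a, [(i,False)]) \<in> word_eqv d k" using step_eqv[OF s1 aw] by simp
  have e2: "(a, replicate (k - 1) (i,True)) \<in> word_eqv d k" using step_eqv[OF s2 aw] by simp
  show ?thesis using eqv_trans[OF eqv_sym[OF e1] e2] .
qed

lemma pos_form:
  "w \<in> words d \<Longrightarrow> \<exists>w'. (w, w') \<in> word_eqv d k \<and> (\<forall>x\<in>set w'. snd x \<and> fst x \<le> d)"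
proof (induction w)
  case Nil
  show ?case using eqv_refl[of "[]"] by (auto simp: words_def)
next
  case (Cons x w)
  obtain i b where x: "x = (i,b)" by (cases x)
  have wd: "w \<in> words d" "i \<le> d" using Cons.prems x by (auto simp: words_def)
  obtain w' where w': "(w, w') \<in> word_eqv d k" "\<forall>x\<in>set w'. snd x \<and> fst x \<le> d" using Cons.IH[OF wd(1)] by blast
  show ?case
  proof (cases b)
    case True
    have "([x], [x]) \<in> word_eqv d k" using eqv_refl wd x by (simp add: words_def)
    then have "([x] @ w, [x] @ w') \<in> word_eqv d k" using eqv_cong w'(1) by blast
    then show ?thesis using w'(2) x True wd(2) by (intro exI[of _ "x # w'"]) simp
  next
    case False
    have "([x] @ w, replicate (k - 1) (i,True) @ w') \<in> word_eqv d k"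
      using eqv_cong[OF neg_letter[OF wd(2)] w'(1)] x False by simp
    then show ?thesis using w'(2) wd(2) by (intro exI[of _ "replicate (k - 1) (i,True) @ w'"]) auto
  qed
qed

lemma pos_free:
  assumes "\<tau> \<in> dcells d k"
  shows "\<forall>w. length w = n \<longrightarrow> (\<forall>x\<in>set w. snd x \<and> fst x \<le> d) \<longrightarrow> act_word k \<Gamma> \<Omega> w \<tau> = \<tau> \<longrightarrow> (w, []) \<in> word_eqv d k"
proof (induction n rule: less_induct)
  case (less n)
  show ?case
  proof (intro allI impI)
    fix w assume len: "length w = n" and pos: "\<forall>x\<in>set w. snd x \<and> fst x \<le> d" and fx: "act_word k \<Gamma> \<Omega> w \<tau> = \<tau>"
    have wd: "w \<in> words d" using pos by (simp add: words_def)
    show "(w, []) \<in> word_eqv d k"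
    proof (cases "\<exists>u v i. w = u @ replicate k (i,True) @ v")
      case True
      then obtain u v i where w: "w = u @ replicate k (i,True) @ v" by blast
      have "(i,True) \<in> set w" using w k1 by (cases k) auto
      then have id: "i \<le> d" using pos by auto
      have st: "(w, u @ v) \<in> elem_step d k" unfolding w by (rule elem_step.relator[OF id])
      have e: "(w, u @ v) \<in> word_eqv d k" using step_eqv[OF st wd] .
      have l: "length (u @ v) < n" using len w k1 by simp
      have p2: "\<forall>x\<in>set (u @ v). snd x \<and> fst x \<le> d" using pos w by auto
      have f2: "act_word k \<Gamma> \<Omega> (u @ v) \<tau> = \<tau>" using eqv_act[OF e assms] fx by simp
      have "(u @ v, []) \<in> word_eqv d k" using less.IH[OF l] p2 f2 by blast
      then show ?thesis using eqv_trans[OF e] by blast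
    next
      case False
      show ?thesis
      proof (cases "w = []")
        case True then show ?thesis using eqv_refl[of "[]"] by (simp add: words_def)
      next
        case ne: False
        have "act_word k \<Gamma> \<Omega> w \<tau> \<noteq> \<tau>" using moves[OF ne pos False assms] .
        then show ?thesis using fx by simp
      qed
    qed
  qed
qed

lemma free:
  assumes "w \<in> words d" "\<tau> \<in> dcells d k" "act_word k \<Gamma> \<Omega> w \<tau> = \<tau>"
  shows "(w, []) \<in> word_eqv d k"
proof -
  obtain w' where w': "(w, w') \<in> word_eqv d k" "\<forall>x\<in>set w'. snd x \<and> fst x \<le> d" using pos_form[OF assms(1)] by blast
  have "act_word k \<Gamma> \<Omega> w' \<tau> = \<tau>" using eqv_act[OF w'(1) assms(2)] assms(3) by simp
  then have "(w', []) \<in> word_eqv d k" using pos_free[OF assms(2)] w'(2) by blast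
  then show ?thesis using eqv_trans[OF w'(1)] by blast
qed

definition reach :: "nat set \<Rightarrow> vert set \<Rightarrow> vert set \<Rightarrow> bool" where
  "reach J x y \<longleftrightarrow> (\<exists>u\<in>wordsJ J. act_word k \<Gamma> \<Omega> u x = y)"

lemma reach_refl: "reach J x x"
  unfolding reach_def wordsJ_def by (rule bexI[of _ "[]"]) simp_all

lemma reach_trans: "reach J x y \<Longrightarrow> reach J y z \<Longrightarrow> reach J x z"
  unfolding reach_def
proof -
  assume "\<exists>u\<in>wordsJ J. act_word k \<Gamma> \<Omega> u x = y" "\<exists>u\<in>wordsJ J. act_word k \<Gamma> \<Omega> u y = z"
  then obtain u v where u: "u \<in> wordsJ J" "act_word k \<Gamma> \<Omega> u x = y" and v: "v \<in> wordsJ J" "act_word k \<Gamma> \<Omega> v y = z" by blast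
  have "v @ u \<in> wordsJ J" using u v by (auto simp: wordsJ_def)
  moreover have "act_word k \<Gamma> \<Omega> (v @ u) x = z" using u v act_append by simp
  ultimately show "\<exists>u\<in>wordsJ J. act_word k \<Gamma> \<Omega> u x = z" by blast
qed

lemma step_reach:
  assumes "x \<in> dcells d k" "i \<le> d" "i \<in> J" "y \<in> delta d k (face x i)"
  shows "reach J x y"
proof -
  have r: "face x i \<in> ridges d k" "x \<in> delta d k (face x i)" using face_props(3,4)[OF assms(1,2)] by auto
  obtain l where l: "l \<in> {0..<int k}" "\<Omega> (face x i) l x = y" using \<Omega>_trans[OF r assms(4)] by blast
  have "act_word k \<Gamma> \<Omega> (replicate (nat l) (i,True)) x = \<Omega> (face x i) (int (nat l) mod int k) x"
    using act_rep[OF assms(1,2)] .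
  also have "int (nat l) mod int k = l" using l(1) by simp
  finally have "act_word k \<Gamma> \<Omega> (replicate (nat l) (i,True)) x = y" using l(2) by simp
  moreover have "replicate (nat l) (i,True) \<in> wordsJ J" using assms(3) by (simp add: wordsJ_def)
  ultimately show ?thesis unfolding reach_def by blast
qed

definition stuck :: "vert set \<Rightarrow> vert set \<Rightarrow> bool" where
  "stuck \<rho> \<tau> \<longleftrightarrow> \<tau> \<in> dcells d k \<and> \<rho> \<subseteq> \<tau> \<and> (pth \<tau> = [] \<or> \<not> \<rho> \<subseteq> piF \<tau>)"

lemma stuck_new: "stuck \<rho> \<tau> \<Longrightarrow> pth \<tau> \<noteq> [] \<Longrightarrow> New (pth \<tau>) \<in> \<rho>"
  unfolding stuck_def piF_def by blast

lemma stuck_unique: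
  assumes "stuck \<rho> t1" "stuck \<rho> t2"
  shows "t1 = t2"
proof -
  have a1: "(pth t1, t1) \<in> arb_cells d k" "\<rho> \<subseteq> t1" using assms(1) cell_pth unfolding stuck_def by auto
  have a2: "(pth t2, t2) \<in> arb_cells d k" "\<rho> \<subseteq> t2" using assms(2) cell_pth unfolding stuck_def by auto
  have p12: "\<exists>r. pth t2 = pth t1 @ r" if "pth t1 \<noteq> []"
  proof -
    have "New (pth t1) \<in> t2" using stuck_new[OF assms(1) that] a2(2) by blast
    then show ?thesis using arb_newD[OF a2(1)] by blast
  qed
  have p21: "\<exists>r. pth t1 = pth t2 @ r" if "pth t2 \<noteq> []"
  proof -
    have "New (pth t2) \<in> t1" using stuck_new[OF assms(2) that] a1(2) by blast
    then show ?thesis using arb_newD[OF a1(1)] by blast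
  qed
  have "pth t1 = pth t2"
  proof (cases "pth t1 = []")
    case True
    show ?thesis
    proof (cases "pth t2 = []")
      case True then show ?thesis using \<open>pth t1 = []\<close> by simp
    next
      case False then show ?thesis using p21 True by auto
    qed
  next
    case False
    then obtain r where r: "pth t2 = pth t1 @ r" using p12 by blast
    then have "pth t2 \<noteq> []" using False by simp
    then obtain r' where "pth t1 = pth t2 @ r'" using p21 by blast
    then show ?thesis using r by simp
  qed
  then show ?thesis using arb_fun a1(1) a2(1) by metis
qed

lemma reach_stuck:
  assumes "\<rho> \<subseteq> \<tau>" "\<tau> \<in> dcells d k"
  shows "\<exists>S. stuck \<rho> S \<and> reach ({0..d} - \<Gamma> ` \<rho>) \<tau> S \<and> reach ({0..d} - \<Gamma> ` \<rho>) S \<tau>"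
  using assms
proof (induction "length (pth \<tau>)" arbitrary: \<tau> rule: less_induct)
  case less
  let ?J = "{0..d} - \<Gamma> ` \<rho>"
  show ?case
  proof (cases "stuck \<rho> \<tau>")
    case True
    then show ?thesis using reach_refl by blast
  next
    case False
    then have ne: "pth \<tau> \<noteq> []" and sub: "\<rho> \<subseteq> piF \<tau>" using less.prems unfolding stuck_def by auto
    obtain V0 where V0: "V0 \<in> dcells d k" "piF \<tau> \<subseteq> V0" "Suc (length (pth V0)) = length (pth \<tau>)"
      "card (piF \<tau>) = d" "piF \<tau> \<subseteq> \<tau>" "V0 \<in> delta d k (piF \<tau>)"
      using parent[OF less.prems(2) ne] by blast
    have rid: "piF \<tau> \<in> ridges d k" unfolding ridges_def using V0(4,5) less.prems(2) by blast
    have tin: "\<tau> \<in> delta d k (piF \<tau>)" unfolding delta_def using V0(5) less.prems(2) by simp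
    obtain i where i: "i \<le> d" "piF \<tau> = face \<tau> i" using ridge_face[OF rid tin] by blast
    have iJ: "i \<in> ?J"
    proof -
      have "i \<notin> \<Gamma> ` \<rho>"
      proof
        assume "i \<in> \<Gamma> ` \<rho>"
        then obtain v where "v \<in> \<rho>" "\<Gamma> v = i" by blast
        then show False using sub i(2) unfolding face_def by auto
      qed
      then show ?thesis using i(1) by simp
    qed
    have r1: "reach ?J \<tau> V0" using step_reach[OF less.prems(2) i(1) iJ] V0(6) i(2) by simp
    have fV: "face V0 i = face \<tau> i" using face_same[OF less.prems(2) i(1)] V0(6) i(2) by simp
    have r2: "reach ?J V0 \<tau>" using step_reach[OF V0(1) i(1) iJ] tin i(2) fV by simp
    have rV: "\<rho> \<subseteq> V0" using sub V0(2) by blast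
    have "length (pth V0) < length (pth \<tau>)" using V0(3) by simp
    then obtain S where S: "stuck \<rho> S" "reach ?J V0 S" "reach ?J S V0" using less.hyps rV V0(1) by blast
    then show ?thesis using reach_trans r1 r2 by blast
  qed
qed

lemma main:
  assumes "\<tau> \<in> dcells d k" "\<rho> \<subseteq> \<tau>"
  shows "L_set d k \<Gamma> \<Omega> \<rho> \<tau> = K_sub d k ({0..d} - \<Gamma> ` \<rho>)"
proof -
  let ?J = "{0..d} - \<Gamma> ` \<rho>"
  have J: "?J \<subseteq> {0..d}" by auto
  have K: "K_sub d k ?J = cls d k ` wordsJ ?J" using K_char[OF J] .
  show ?thesis unfolding K
  proof
    show "L_set d k \<Gamma> \<Omega> \<rho> \<tau> \<subseteq> cls d k ` wordsJ ?J"
    proof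
      fix g assume "g \<in> L_set d k \<Gamma> \<Omega> \<rho> \<tau>"
      then have g: "g \<in> carrier (G_dk d k)" "\<rho> \<subseteq> act k \<Gamma> \<Omega> g \<tau>" unfolding L_set_def by auto
      obtain w0 where w0: "w0 \<in> words d" "g = cls d k w0" using g(1) carrier_G by auto
      define t' where "t' = act_word k \<Gamma> \<Omega> w0 \<tau>"
      have t'c: "t' \<in> dcells d k" unfolding t'_def using act_word_in[OF assms(1)] w0(1) by (simp add: words_def)
      have rt': "\<rho> \<subseteq> t'" using g(2) act_cls[OF w0(1) assms(1)] w0(2) unfolding t'_def by simp
      obtain S1 where S1: "stuck \<rho> S1" "reach ?J \<tau> S1" using reach_stuck[OF assms(2,1)] by blast
      obtain S2 where S2: "stuck \<rho> S2" "reach ?J S2 t'" using reach_stuck[OF rt' t'c] by blast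
      have "S1 = S2" using stuck_unique S1(1) S2(1) by blast
      then have "reach ?J \<tau> t'" using reach_trans S1(2) S2(2) by blast
      then obtain u where u: "u \<in> wordsJ ?J" "act_word k \<Gamma> \<Omega> u \<tau> = t'" unfolding reach_def by blast
      have ud: "u \<in> words d" using u(1) wordsJ_words[OF J] by blast
      define z where "z = invw u @ w0"
      have zd: "z \<in> words d" unfolding z_def using invw_words[OF ud] w0(1) by (auto simp: words_def)
      have "act_word k \<Gamma> \<Omega> z \<tau> = act_word k \<Gamma> \<Omega> (invw u @ u) \<tau>"
        unfolding z_def using act_append u(2) t'_def by simp
      also have "\<dots> = act_word k \<Gamma> \<Omega> [] \<tau>" using eqv_act[OF inv_left[OF ud] assms(1)] .
      finally have "act_word k \<Gamma> \<Omega> z \<tau> = \<tau>" by simp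
      then have z0: "(z, []) \<in> word_eqv d k" using free[OF zd assms(1)] by simp
      have "(u @ z, u @ []) \<in> word_eqv d k" using eqv_cong[OF eqv_refl[OF ud] z0] .
      then have e1: "(u @ z, u) \<in> word_eqv d k" by simp
      have "((u @ invw u) @ w0, [] @ w0) \<in> word_eqv d k" using eqv_cong[OF inv_right[OF ud] eqv_refl[OF w0(1)]] .
      then have e2: "(u @ z, w0) \<in> word_eqv d k" unfolding z_def by simp
      have "(w0, u) \<in> word_eqv d k" using eqv_trans[OF eqv_sym[OF e2] e1] .
      then have "g = cls d k u" using cls_eq w0(2) by simp
      then show "g \<in> cls d k ` wordsJ ?J" using u(1) by blast
    qed
  next
    show "cls d k ` wordsJ ?J \<subseteq> L_set d k \<Gamma> \<Omega> \<rho> \<tau>"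
    proof
      fix g assume "g \<in> cls d k ` wordsJ ?J"
      then obtain w where w: "w \<in> wordsJ ?J" "g = cls d k w" by blast
      have wd: "w \<in> words d" using w(1) wordsJ_words[OF J] by blast
      have "act_word k \<Gamma> \<Omega> w \<tau> \<in> dcells d k \<and> \<rho> \<subseteq> act_word k \<Gamma> \<Omega> w \<tau>" using w(1)
      proof (induction w)
        case Nil then show ?case using assms by simp
      next
        case (Cons x w)
        have xJ: "fst x \<in> ?J" and wJ: "w \<in> wordsJ ?J" using Cons.prems by (auto simp: wordsJ_def)
        define t where "t = act_word k \<Gamma> \<Omega> w \<tau>"
        have t: "t \<in> dcells d k" "\<rho> \<subseteq> t" using Cons.IH[OF wJ] unfolding t_def by auto
        have xd: "fst x \<le> d" using xJ by simp
        have inD: "act_letter k \<Gamma> \<Omega> x t \<in> delta d k (face t (fst x))" using act_letter_in(1)[OF t(1) xd] .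
        have "\<rho> \<subseteq> face t (fst x)"
        proof
          fix v assume v: "v \<in> \<rho>"
          have "\<Gamma> v \<noteq> fst x"
          proof
            assume "\<Gamma> v = fst x"
            then have "fst x \<in> \<Gamma> ` \<rho>" using v by (metis image_eqI)
            then show False using xJ by simp
          qed
          then show "v \<in> face t (fst x)" unfolding face_def using v t(2) by auto
        qed
        then have "\<rho> \<subseteq> act_letter k \<Gamma> \<Omega> x t" using inD unfolding delta_def by auto
        moreover have "act_letter k \<Gamma> \<Omega> x t \<in> dcells d k" using act_letter_in(2)[OF t(1) xd] .
        ultimately show ?case unfolding t_def by simp
      qed
      then have "\<rho> \<subseteq> act k \<Gamma> \<Omega> g \<tau>" using act_cls[OF wd assms(1)] w(2) by simp
      moreover have "g \<in> carrier (G_dk d k)" using carrier_G wd w(2) by simp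
      ultimately show "g \<in> L_set d k \<Gamma> \<Omega> \<rho> \<tau>" unfolding L_set_def by simp
    qed
  qed
qed

end

theorem lemma5:
  fixes d k :: nat and \<Gamma> :: "vert \<Rightarrow> nat"
    and \<Omega> :: "vert set \<Rightarrow> int \<Rightarrow> vert set \<Rightarrow> vert set"
  assumes "1 \<le> d" and "1 \<le> k"
    and "coloring d k \<Gamma>" and "k_ordering d k \<Omega>"
    and "\<tau> \<in> dcells d k" and "\<rho> \<in> cells d k" and "\<rho> \<subseteq> \<tau>"
  shows "L_set d k \<Gamma> \<Omega> \<rho> \<tau> = K_sub d k ({0..d} - \<Gamma> ` \<rho>)"
proof -
  interpret arbset d k \<Gamma> \<Omega> using assms(1-4) by (unfold_locales)
  show ?thesis using main[OF assms(5,7)] .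
qed


end
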